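(* Let $0\le a<b<\infty$, $\Delta>0$, $\mathbb T_{a,b,\Delta}=\{(t_1,t_2)\in\mathbb R_+^2:a\le t_1\le b,\ t_1-\Delta\le t_2\le t_1\}$, $d(\mathbf t,\mathbf s)=\max\{|t_1-s_1|,|t_2-s_2|\}$. Let $X=\{X(\mathbf t),\mathbf t\in\mathbb T_{a,b,\Delta}\}$ be a centered separable Gaussian process with $m:=\sup_{\mathbf t\in\mathbb T_{a,b,\Delta}}\left(\mathbb E X(\mathbf t)^2\right)^{1/2}\in(0,\infty)$ and $\sup_{d(\mathbf t,\mathbf s)\le h,\ \mathbf t,\mathbf s\in\mathbb T_{a,b,\Delta}}\left(\mathbb E(X(\mathbf t)-X(\mathbf s))^2\right)^{1/2}\le ch^\beta$ for all $h>0$, where $c>0$, $\beta\in(0,1]$. Put $\widehat d=\max\{\frac2{b-a},\frac4\Delta\}$. Then for all $\lambda>0$, $0<\varepsilon<\beta$, $0<\theta<1$, \[ \mathbb E\exp\Big\{\lambda\sup_{\mathbf t\in\mathbb T_{a,b,\Delta}}|X(\mathbf t)|\Big\}\le2^{\frac2\varepsilon-2}(b-a)\Delta\exp\Big\{\frac{\lambda^2m^2}{2(1-\theta)^2}\Big\}\Big(\frac{c^{2/\beta}}{(1-\frac\varepsilon\beta)^{2/\varepsilon}(\theta m)^{2/\beta}}+\widehat d^{\,2}\Big). \] *)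

theory Defs
  imports "HOL-Probability.Probability"
begin

definition Tset :: "real \<Rightarrow> real \<Rightarrow> real \<Rightarrow> (real \<times> real) set" where
  "Tset a b \<Delta> = {(t1, t2). 0 \<le> t1 \<and> 0 \<le> t2 \<and> a \<le> t1 \<and> t1 \<le> b \<and> t1 - \<Delta> \<le> t2 \<and> t2 \<le> t1}"

definition dmax :: "real \<times> real \<Rightarrow> real \<times> real \<Rightarrow> real" where
  "dmax t s = max \<bar>fst t - fst s\<bar> \<bar>snd t - snd s\<bar>"

definition centered_gaussian_rv :: "'a measure \<Rightarrow> ('a \<Rightarrow> real) \<Rightarrow> bool" where
  "centered_gaussian_rv M Y \<longleftrightarrow> Y \<in> borel_measurable M \<and>
     ((AE \<omega> in M. Y \<omega> = 0) \<or>
      (\<exists>\<sigma>>0. distributed M lborel Y (\<lambda>x. ennreal (normal_density 0 \<sigma> x))))"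

definition centered_gaussian_process :: "'a measure \<Rightarrow> 'i set \<Rightarrow> ('i \<Rightarrow> 'a \<Rightarrow> real) \<Rightarrow> bool" where
  "centered_gaussian_process M T X \<longleftrightarrow>
     (\<forall>F c. finite F \<and> F \<subseteq> T \<longrightarrow> centered_gaussian_rv M (\<lambda>\<omega>. \<Sum>t\<in>F. c t * X t \<omega>))"

text \<open>Separability in the sense of Doob (sequential form): there is a countable
  separant S and a null set N such that off N every value X t is a limit of values on S
  along a sequence in S converging to t.\<close>
definition separable_process :: "'a measure \<Rightarrow> ('i::metric_space) set \<Rightarrow> ('i \<Rightarrow> 'a \<Rightarrow> real) \<Rightarrow> bool" where
  "separable_process M T X \<longleftrightarrow>
     (\<exists>S N. countable S \<and> S \<subseteq> T \<and> N \<in> null_sets M \<and>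
        (\<forall>\<omega>\<in>space M - N. \<forall>t\<in>T. \<exists>s. (\<forall>n. s n \<in> S) \<and> s \<longlonglongrightarrow> t \<and>
            (\<lambda>n. X (s n) \<omega>) \<longlonglongrightarrow> X t \<omega>))"

end

theory Submission
  imports Defs
begin

lemma normal_mgf_pointwise:
  assumes "\<sigma> > 0"
  shows "normal_density 0 \<sigma> x * exp (\<mu> * x) = exp (\<mu>\<^sup>2 * \<sigma>\<^sup>2 / 2) * normal_density (\<mu> * \<sigma>\<^sup>2) \<sigma> x"
proof -
  have "-(x - 0)\<^sup>2 / (2 * \<sigma>\<^sup>2) + \<mu> * x = \<mu>\<^sup>2 * \<sigma>\<^sup>2 / 2 + (-(x - \<mu> * \<sigma>\<^sup>2)\<^sup>2 / (2 * \<sigma>\<^sup>2))"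
    using assms by (simp add: field_simps power2_eq_square)
  then have "exp (-(x - 0)\<^sup>2 / (2 * \<sigma>\<^sup>2)) * exp (\<mu> * x) = exp (\<mu>\<^sup>2 * \<sigma>\<^sup>2 / 2) * exp (-(x - \<mu> * \<sigma>\<^sup>2)\<^sup>2 / (2 * \<sigma>\<^sup>2))"
    by (metis exp_add)
  then show ?thesis unfolding normal_density_def by (simp add: mult_ac)
qed

lemma nn_integral_normal_density:
  assumes "\<sigma> > 0"
  shows "(\<integral>\<^sup>+x. ennreal (normal_density \<mu> \<sigma> x) \<partial>lborel) = 1"
  using assms by (subst nn_integral_eq_integral) auto

lemma normal_mgf_nn:
  assumes "\<sigma> > 0"
  shows "(\<integral>\<^sup>+x. ennreal (normal_density 0 \<sigma> x) * ennreal (exp (\<mu> * x)) \<partial>lborel) = ennreal (exp (\<mu>\<^sup>2 * \<sigma>\<^sup>2 / 2))"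
proof -
  have "(\<integral>\<^sup>+x. ennreal (normal_density 0 \<sigma> x) * ennreal (exp (\<mu> * x)) \<partial>lborel)
      = (\<integral>\<^sup>+x. ennreal (exp (\<mu>\<^sup>2 * \<sigma>\<^sup>2 / 2)) * ennreal (normal_density (\<mu> * \<sigma>\<^sup>2) \<sigma> x) \<partial>lborel)"
    by (intro nn_integral_cong) (simp add: ennreal_mult'[symmetric] normal_mgf_pointwise[OF assms])
  also have "\<dots> = ennreal (exp (\<mu>\<^sup>2 * \<sigma>\<^sup>2 / 2))"
    by (subst nn_integral_cmult) (auto simp: nn_integral_normal_density[OF assms])
  finally show ?thesis .
qed

lemma gauss_abs_mgf:
  assumes P: "prob_space M" and G: "centered_gaussian_rv M Y" and mu: "0 \<le> \<mu>"
  shows "(\<integral>\<^sup>+\<omega>. ennreal (exp (\<mu> * \<bar>Y \<omega>\<bar>)) \<partial>M)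
           \<le> ennreal (2 * exp (\<mu>\<^sup>2 * prob_space.expectation M (\<lambda>\<omega>. (Y \<omega>)\<^sup>2) / 2))"
proof -
  interpret prob_space M by (rule P)
  have Ym: "Y \<in> borel_measurable M" using G unfolding centered_gaussian_rv_def by auto
  have Enn: "0 \<le> expectation (\<lambda>\<omega>. (Y \<omega>)\<^sup>2)" by (rule integral_nonneg_AE) auto
  from G consider (z) "AE \<omega> in M. Y \<omega> = 0"
    | (n) \<sigma> where "\<sigma> > 0" "distributed M lborel Y (\<lambda>x. ennreal (normal_density 0 \<sigma> x))"
    unfolding centered_gaussian_rv_def by blast
  then show ?thesis
  proof cases
    case z
    have "(\<integral>\<^sup>+\<omega>. ennreal (exp (\<mu> * \<bar>Y \<omega>\<bar>)) \<partial>M) = (\<integral>\<^sup>+\<omega>. 1 \<partial>M)"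
      by (intro nn_integral_cong_AE) (use z in auto)
    also have "\<dots> = 1" by (simp add: emeasure_space_1)
    also have "\<dots> \<le> ennreal (2 * exp (\<mu>\<^sup>2 * expectation (\<lambda>\<omega>. (Y \<omega>)\<^sup>2) / 2))"
    proof -
      have "1 \<le> exp (\<mu>\<^sup>2 * expectation (\<lambda>\<omega>. (Y \<omega>)\<^sup>2) / 2)" using Enn by simp
      then have "1 \<le> 2 * exp (\<mu>\<^sup>2 * expectation (\<lambda>\<omega>. (Y \<omega>)\<^sup>2) / 2)" by linarith
      then show ?thesis using ennreal_leI by fastforce
    qed
    finally show ?thesis .
  next
    case n
    note D = n(2)
    have var: "expectation (\<lambda>\<omega>. (Y \<omega>)\<^sup>2) = \<sigma>\<^sup>2"
      using normal_distributed_variance[OF n(1) D] normal_distributed_expectation[OF n(1) D] by simp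
    have "(\<integral>\<^sup>+\<omega>. ennreal (exp (\<mu> * \<bar>Y \<omega>\<bar>)) \<partial>M)
        \<le> (\<integral>\<^sup>+\<omega>. ennreal (exp (\<mu> * Y \<omega>)) + ennreal (exp ((-\<mu>) * Y \<omega>)) \<partial>M)"
    proof (intro nn_integral_mono)
      fix \<omega>
      have "exp (\<mu> * \<bar>Y \<omega>\<bar>) \<le> exp (\<mu> * Y \<omega>) + exp ((-\<mu>) * Y \<omega>)"
        by (cases "Y \<omega> \<ge> 0") (auto simp: add_increasing add_increasing2)
      then show "ennreal (exp (\<mu> * \<bar>Y \<omega>\<bar>)) \<le> ennreal (exp (\<mu> * Y \<omega>)) + ennreal (exp ((-\<mu>) * Y \<omega>))"
        by (simp add: ennreal_plus[symmetric] del: ennreal_plus)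
    qed
    also have "\<dots> = (\<integral>\<^sup>+\<omega>. ennreal (exp (\<mu> * Y \<omega>)) \<partial>M) + (\<integral>\<^sup>+\<omega>. ennreal (exp ((-\<mu>) * Y \<omega>)) \<partial>M)"
      using Ym by (intro nn_integral_add) auto
    also have "(\<integral>\<^sup>+\<omega>. ennreal (exp (\<mu> * Y \<omega>)) \<partial>M) = ennreal (exp (\<mu>\<^sup>2 * \<sigma>\<^sup>2 / 2))"
      using distributed_nn_integral[OF D, of "\<lambda>x. ennreal (exp (\<mu> * x))"] normal_mgf_nn[OF n(1), of \<mu>]
      by simp
    also have "(\<integral>\<^sup>+\<omega>. ennreal (exp ((-\<mu>) * Y \<omega>)) \<partial>M) = ennreal (exp ((-\<mu>)\<^sup>2 * \<sigma>\<^sup>2 / 2))"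
      using distributed_nn_integral[OF D, of "\<lambda>x. ennreal (exp ((-\<mu>) * x))"] normal_mgf_nn[OF n(1), of "-\<mu>"]
      by simp
    also have "ennreal (exp (\<mu>\<^sup>2 * \<sigma>\<^sup>2 / 2)) + ennreal (exp ((-\<mu>)\<^sup>2 * \<sigma>\<^sup>2 / 2))
        = ennreal (2 * exp (\<mu>\<^sup>2 * expectation (\<lambda>\<omega>. (Y \<omega>)\<^sup>2) / 2))"
      by (simp add: var ennreal_plus[symmetric] del: ennreal_plus)
    finally show ?thesis .
  qed
qed

lemma covering:
  assumes a0: "0 \<le> a" and ab: "a < b" and D: "\<Delta> > 0" and r: "r > 0"
  shows "\<exists>G. finite G \<and> G \<subseteq> Tset a b \<Delta> \<and> G \<noteq> {} \<and>
     real (card G) \<le> ((b-a)/(2*r)+1)*(\<Delta>/(2*r)+2) \<and> (\<forall>t\<in>Tset a b \<Delta>. \<exists>g\<in>G. dmax t g \<le> r)"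
proof -
  define n1 where "n1 = nat \<lceil>(b-a)/(2*r)\<rceil>"
  define n2 where "n2 = nat \<lceil>\<Delta>/(2*r)\<rceil> + 1"
  define Rr where "Rr = (\<lambda>i::nat. min b (a + 2*r*(i+1)))"
  define ctr where "ctr = (\<lambda>i::nat. (a + 2*r*i + Rr i)/2)"
  define lo where "lo = (\<lambda>i. max 0 (ctr i - \<Delta>))"
  define pt where "pt = (\<lambda>(i::nat,k::nat). (ctr i, min (ctr i) (lo i + 2*r*k)))"
  define G where "G = pt ` ({..<n1} \<times> {..<n2})"
  have n1pos: "n1 \<ge> 1"
  proof -
    have "(b-a)/(2*r) > 0" using ab r by simp
    then have "\<lceil>(b-a)/(2*r)\<rceil> \<ge> 1" by (simp add: zero_less_ceiling)
    then show ?thesis unfolding n1_def by linarith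
  qed
  have n1le: "real n1 \<le> (b-a)/(2*r)+1" unfolding n1_def
    using ab r by (simp add: divide_pos_pos)
  have n1ge: "real n1 \<ge> (b-a)/(2*r)" unfolding n1_def by linarith
  have n2le: "real n2 \<le> \<Delta>/(2*r)+2" unfolding n2_def using D r
    by (simp add: divide_pos_pos) linarith
  have fin: "finite G" unfolding G_def by auto
  have ne: "G \<noteq> {}"
  proof -
    have "(0,0) \<in> {..<n1}\<times>{..<n2}" using n1pos by (auto simp: n2_def)
    then show ?thesis unfolding G_def by blast
  qed
  have card: "real (card G) \<le> ((b-a)/(2*r)+1)*(\<Delta>/(2*r)+2)"
  proof -
    have "card G \<le> card ({..<n1} \<times> {..<n2})" unfolding G_def by (rule card_image_le) auto
    also have "\<dots> = n1 * n2" by (simp add: card_cartesian_product)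
    finally have "real (card G) \<le> real n1 * real n2" by (metis of_nat_le_iff of_nat_mult)
    also have "\<dots> \<le> ((b-a)/(2*r)+1)*(\<Delta>/(2*r)+2)"
      by (rule mult_mono) (use n1le n2le in auto)
    finally show ?thesis .
  qed
  have ctr_bounds: "a \<le> ctr i \<and> ctr i \<le> b" if "i < n1" for i
  proof -
    have "real i < (b-a)/(2*r)" using that n1_def by linarith
    then have "2*r*i < b - a" using r by (simp add: field_simps)
    moreover have "0 \<le> 2*r*i" using r by simp
    moreover have "2*r*i \<le> 2*r*(i+1)" using r by simp
    ultimately have m: "a \<le> Rr i" "Rr i \<le> b" "0 \<le> 2*r*i" "2*r*i < b - a"
      unfolding Rr_def using ab r by auto
    have "2 * ctr i = a + 2*r*i + Rr i" unfolding ctr_def by simp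
    then show ?thesis using m by (intro conjI; linarith)
  qed
  have sub: "G \<subseteq> Tset a b \<Delta>"
  proof
    fix g assume "g \<in> G"
    then obtain i k where ik: "i < n1" "g = pt (i,k)" unfolding G_def by auto
    have lo0: "0 \<le> lo i" "ctr i - \<Delta> \<le> lo i" "lo i \<le> ctr i" unfolding lo_def using ctr_bounds[OF ik(1)] a0 D by auto
    have "0 \<le> 2*r*real k" using r by simp
    then have "ctr i - \<Delta> \<le> lo i + 2*r*real k" "0 \<le> lo i + 2*r*real k" using lo0 by linarith+
    then show "g \<in> Tset a b \<Delta>" using ik ctr_bounds[OF ik(1)] lo0 a0 r
      unfolding Tset_def pt_def by auto
  qed
  have cov: "\<exists>g\<in>G. dmax t g \<le> r" if t: "t \<in> Tset a b \<Delta>" for t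
  proof -
    obtain t1 t2 where tt: "t = (t1,t2)" by (cases t)
    have T: "0 \<le> t2" "a \<le> t1" "t1 \<le> b" "t1 - \<Delta> \<le> t2" "t2 \<le> t1" using t tt unfolding Tset_def by auto
    define i0 where "i0 = nat \<lfloor>(t1-a)/(2*r)\<rfloor>"
    define i where "i = min i0 (n1 - 1)"
    have i_lt: "i < n1" unfolding i_def using n1pos by auto
    have i0le: "real i0 \<le> (t1-a)/(2*r)" unfolding i0_def using T r
      by (simp add: divide_nonneg_pos)
    have i0gt: "(t1-a)/(2*r) < real i0 + 1" unfolding i0_def using T r
      by (simp add: divide_nonneg_pos)
    have L: "a + 2*r*i \<le> t1"
    proof -
      have "real i \<le> (t1-a)/(2*r)" using i0le unfolding i_def by auto
      then show ?thesis using r by (simp add: field_simps)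
    qed
    have R: "t1 \<le> a + 2*r*(i+1)"
    proof (cases "i0 \<le> n1 - 1")
      case True
      then have "i = i0" unfolding i_def by auto
      then show ?thesis using i0gt r by (simp add: field_simps)
    next
      case False
      then have "i = n1 - 1" unfolding i_def by auto
      then have "real (i+1) = real n1" using n1pos by auto
      then have "a + 2*r*(i+1) \<ge> b" using n1ge r by (simp add: field_simps)
      then show ?thesis using T by linarith
    qed
    have c1: "\<bar>t1 - ctr i\<bar> \<le> r"
    proof -
      have "t1 \<le> Rr i" "Rr i \<le> a + 2*r*(i+1)" unfolding Rr_def using R T by (auto simp: add.commute)
      moreover have "a + 2*r*i \<le> Rr i" unfolding Rr_def using L T r ab by (auto simp: algebra_simps)
      moreover have "2 * ctr i = a + 2*r*i + Rr i" unfolding ctr_def by simp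
      moreover have "a + 2*r*(i+1) = a + 2*r*i + 2*r" by (simp add: algebra_simps)
      ultimately show ?thesis using L by linarith
    qed
    have lo0: "0 \<le> lo i" "ctr i - \<Delta> \<le> lo i" "lo i \<le> ctr i" unfolding lo_def using ctr_bounds[OF i_lt] a0 D by auto
    have t2lo: "lo i - r \<le> t2" unfolding lo_def using T c1 r by auto
    have t2hi: "t2 \<le> ctr i + r" using T c1 by auto
    define k where "k = nat \<lceil>(t2 - lo i - r)/(2*r)\<rceil>"
    have kge: "t2 - r \<le> lo i + 2*r*k"
    proof -
      have "(t2 - lo i - r)/(2*r) \<le> real k" unfolding k_def by linarith
      then show ?thesis using r by (simp add: field_simps)
    qed
    have kle: "lo i + 2*r*k \<le> t2 + r"
    proof (cases "t2 - lo i - r \<le> 0")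
      case True
      then have "\<lceil>(t2 - lo i - r)/(2*r)\<rceil> \<le> 0" using r by (simp add: divide_nonpos_pos)
      then have "k = 0" unfolding k_def by auto
      then show ?thesis using t2lo r by auto
    next
      case False
      then have "real k < (t2 - lo i - r)/(2*r) + 1" unfolding k_def using r
        by (simp add: divide_pos_pos) linarith
      then show ?thesis using r by (simp add: field_simps)
    qed
    have k_lt: "k < n2"
    proof -
      have "(t2 - lo i - r)/(2*r) \<le> \<Delta>/(2*r)" using t2hi lo0 r by (simp add: divide_right_mono)
      then have "\<lceil>(t2 - lo i - r)/(2*r)\<rceil> \<le> \<lceil>\<Delta>/(2*r)\<rceil>" by (rule ceiling_mono)
      then show ?thesis unfolding k_def n2_def by linarith
    qed
    have c2: "\<bar>t2 - min (ctr i) (lo i + 2*r*k)\<bar> \<le> r" using kge kle t2hi by (auto simp: min_def)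
    have "pt (i,k) \<in> G" unfolding G_def using i_lt k_lt by auto
    moreover have "dmax t (pt (i,k)) \<le> r" unfolding dmax_def tt pt_def using c1 c2 by auto
    ultimately show ?thesis by blast
  qed
  show ?thesis using fin sub ne card cov by blast
qed

lemma exp_weighted_jensen:
  fixes J :: "'i set" and w y :: "'i \<Rightarrow> real"
  assumes "finite J" "J \<noteq> {}" "\<And>j. j \<in> J \<Longrightarrow> w j \<ge> 0" "(\<Sum>j\<in>J. w j) = 1"
  shows "exp (\<Sum>j\<in>J. w j * y j) \<le> (\<Sum>j\<in>J. w j * exp (y j))"
  using convex_on_sum[OF assms(1,2) exp_convex assms(4), of y] assms(3) by auto

lemma am_gm_exp:
  fixes J :: "'i set" and w y B :: "'i \<Rightarrow> real"
  assumes J: "finite J" "J \<noteq> {}" and w: "\<And>j. j \<in> J \<Longrightarrow> w j > 0" and ws: "(\<Sum>j\<in>J. w j) = 1"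
    and B: "\<And>j. j \<in> J \<Longrightarrow> B j > 0"
  shows "exp (\<Sum>j\<in>J. y j) \<le> (\<Prod>j\<in>J. B j powr w j) * (\<Sum>j\<in>J. (w j / B j) * exp (y j / w j))"
proof -
  define z where "z j = y j / w j - ln (B j)" for j
  have "(\<Sum>j\<in>J. y j) = (\<Sum>j\<in>J. w j * z j) + (\<Sum>j\<in>J. w j * ln (B j))"
    unfolding sum.distrib[symmetric]
  proof (intro sum.cong refl)
    fix j assume "j \<in> J"
    then have "w j \<noteq> 0" using w by force
    then show "y j = w j * z j + w j * ln (B j)" unfolding z_def by (simp add: field_simps)
  qed
  then have e1: "exp (\<Sum>j\<in>J. y j) = exp (\<Sum>j\<in>J. w j * z j) * exp (\<Sum>j\<in>J. w j * ln (B j))"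
    by (simp add: exp_add)
  have e2: "exp (\<Sum>j\<in>J. w j * ln (B j)) = (\<Prod>j\<in>J. B j powr w j)"
  proof -
    have "(\<Prod>j\<in>J. B j powr w j) = (\<Prod>j\<in>J. exp (w j * ln (B j)))"
      by (intro prod.cong refl) (use B in \<open>force simp: powr_def mult.commute\<close>)
    then show ?thesis by (simp add: exp_sum[OF J(1)])
  qed
  have e3: "exp (\<Sum>j\<in>J. w j * z j) \<le> (\<Sum>j\<in>J. w j * exp (z j))"
    by (rule exp_weighted_jensen[OF J _ ws]) (use w in fastforce)
  have e4: "(\<Sum>j\<in>J. w j * exp (z j)) = (\<Sum>j\<in>J. (w j / B j) * exp (y j / w j))"
    using B by (intro sum.cong) (auto simp: z_def exp_diff)
  have "0 \<le> (\<Prod>j\<in>J. B j powr w j)" by (simp add: prod_nonneg)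
  then have "exp (\<Sum>j\<in>J. w j * z j) * (\<Prod>j\<in>J. B j powr w j) \<le> (\<Sum>j\<in>J. w j * exp (z j)) * (\<Prod>j\<in>J. B j powr w j)"
    using e3 by (rule mult_right_mono[rotated])
  then show ?thesis unfolding e1 e2 e4 by (simp add: mult.commute)
qed

lemma am_gm_powr:
  fixes J :: "'i set" and w x :: "'i \<Rightarrow> real"
  assumes J: "finite J" "J \<noteq> {}" and w: "\<And>j. j \<in> J \<Longrightarrow> w j \<ge> 0" and ws: "(\<Sum>j\<in>J. w j) = 1"
    and x: "\<And>j. j \<in> J \<Longrightarrow> x j > 0"
  shows "(\<Prod>j\<in>J. x j powr w j) \<le> (\<Sum>j\<in>J. w j * x j)"
proof -
  have "(\<Prod>j\<in>J. x j powr w j) = exp (\<Sum>j\<in>J. w j * ln (x j))"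
  proof -
    have "(\<Prod>j\<in>J. x j powr w j) = (\<Prod>j\<in>J. exp (w j * ln (x j)))"
      by (intro prod.cong refl) (use x in \<open>force simp: powr_def mult.commute\<close>)
    then show ?thesis by (simp add: exp_sum[OF J(1)])
  qed
  also have "\<dots> \<le> (\<Sum>j\<in>J. w j * exp (ln (x j)))"
    by (rule exp_weighted_jensen[OF J w ws])
  also have "\<dots> = (\<Sum>j\<in>J. w j * x j)" using x by simp
  finally show ?thesis .
qed

lemma powr_subadd:
  fixes x y e :: real
  assumes "0 \<le> x" "0 \<le> y" "0 < e" "e \<le> 1"
  shows "(x + y) powr e \<le> x powr e + y powr e"
proof (cases "x + y = 0")
  case True then show ?thesis using assms by auto
next
  case False
  define s where "s = x + y"
  have s: "s > 0" using False assms unfolding s_def by auto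
  have k: "t \<le> t powr e" if "0 \<le> t" "t \<le> 1" for t :: real
  proof (cases "t = 0")
    case True then show ?thesis by simp
  next
    case False
    have "t powr 1 \<le> t powr e" by (rule powr_mono') (use that assms in auto)
    then show ?thesis using that by simp
  qed
  have "x powr e = s powr e * (x/s) powr e" using s assms by (simp add: powr_divide)
  moreover have "y powr e = s powr e * (y/s) powr e" using s assms by (simp add: powr_divide)
  moreover have "x/s \<le> (x/s) powr e" by (rule k) (use s assms in \<open>auto simp: s_def\<close>)
  moreover have "y/s \<le> (y/s) powr e" by (rule k) (use s assms in \<open>auto simp: s_def\<close>)
  ultimately have "x powr e + y powr e \<ge> s powr e * (x/s) + s powr e * (y/s)"
    by (smt (verit, best) mult_left_mono powr_ge_zero)
  also have "s powr e * (x/s) + s powr e * (y/s) = s powr e"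
  proof -
    have "s powr e * (x/s) + s powr e * (y/s) = s powr e * ((x + y)/s)"
      by (simp add: add_divide_distrib distrib_left)
    also have "(x + y)/s = 1" using s unfolding s_def by simp
    finally show ?thesis by simp
  qed
  finally show ?thesis unfolding s_def .
qed

lemma powr_convex2:
  fixes p q s :: real
  assumes "0 < p" "0 < q" "1 \<le> s"
  shows "(p + q) powr s \<le> 2 powr (s - 1) * (p powr s + q powr s)"
proof -
  have "((1 - 1/2) *\<^sub>R p + (1/2) *\<^sub>R q) powr s \<le> (1 - 1/2) * p powr s + (1/2) * q powr s"
    by (rule convex_onD[OF powr_convex[OF assms(3)]]) (use assms in auto)
  then have h: "((p + q)/2) powr s \<le> (p powr s + q powr s)/2" by (simp add: field_simps)
  have "(p + q) powr s = 2 powr s * ((p+q)/2) powr s"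
    using assms by (simp add: powr_divide)
  also have "\<dots> \<le> 2 powr s * ((p powr s + q powr s)/2)"
    by (rule mult_left_mono[OF h]) simp
  also have "\<dots> = 2 powr (s - 1) * (p powr s + q powr s)"
    by (simp add: powr_diff)
  finally show ?thesis .
qed

lemma bernoulli_powr:
  fixes \<theta> p :: real
  assumes "0 < \<theta>" "0 \<le> p" "p \<le> 1"
  shows "\<theta> powr p \<le> 1 - p * (1 - \<theta>)"
proof -
  have "exp ((1 - p) *\<^sub>R 0 + p *\<^sub>R ln \<theta>) \<le> (1 - p) * exp 0 + p * exp (ln \<theta>)"
    by (rule convex_onD[OF exp_convex]) (use assms in auto)
  then show ?thesis using assms by (simp add: powr_def algebra_simps)
qed

lemma geom_weight_sum:
  fixes \<theta> :: real
  shows "(\<Sum>j<K. (1-\<theta>)*\<theta>^j) + \<theta>^K = 1"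
proof -
  have "(\<Sum>j<K. (1-\<theta>)*\<theta>^j) = 1 - \<theta>^K"
    by (simp add: sum_distrib_left[symmetric] one_diff_power_eq)
  then show ?thesis by simp
qed

lemma geom_sum_le:
  fixes q :: real
  assumes "0 \<le> q" "q < 1"
  shows "(\<Sum>j<K. q^j) \<le> 1/(1-q)"
proof -
  have "(\<Sum>j<K. q^j) = (1 - q^K)/(1-q)" using assms by (simp add: sum_gp_strict)
  also have "\<dots> \<le> 1/(1-q)" using assms by (intro divide_right_mono) auto
  finally show ?thesis .
qed

lemma term_bound:
  fixes a b \<Delta> r0 \<theta> \<beta> \<epsilon> N :: real and j :: nat
  assumes ab: "a < b" and D: "\<Delta> > 0" and r0: "r0 > 0" and th: "0 < \<theta>" and be: "\<beta> > 0"
    and e: "0 < \<epsilon>" "\<epsilon> \<le> 1"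
    and N1: "1 \<le> N"
    and N: "N \<le> ((b-a)/(2*(r0 * \<theta> powr (j/\<beta>)))+1)*(\<Delta>/(2*(r0 * \<theta> powr (j/\<beta>)))+2)"
  shows "N powr (\<epsilon>/2) \<le> ((b-a)*\<Delta>) powr (\<epsilon>/2) *
           ((2*r0) powr (-\<epsilon>) * \<theta> powr (-(j*\<epsilon>/\<beta>)) + (max (2/(b-a)) (4/\<Delta>) / 2) powr \<epsilon>)"
proof -
  define rj where "rj = r0 * \<theta> powr (j/\<beta>)"
  define v where "v = max (2/(b-a)) (4/\<Delta>)"
  have rj: "rj > 0" unfolding rj_def using r0 th by simp
  have v2: "2/(b-a) \<le> v" "4/\<Delta> \<le> v" unfolding v_def by auto
  have "2/(b-a) > 0" using ab by simp
  then have v0: "v > 0" using v2(1) by (rule less_le_trans)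
  have v1: "1/(b-a) \<le> v/2"
  proof -
    have "(2/(b-a))/2 \<le> v/2" by (rule divide_right_mono[OF v2(1)]) simp
    moreover have "(2/(b-a))/2 = 1/(b-a)" using ab by (simp add: field_simps)
    ultimately show ?thesis by simp
  qed
  have v3: "2/\<Delta> \<le> v/2"
  proof -
    have "(4/\<Delta>)/2 \<le> v/2" by (rule divide_right_mono[OF v2(2)]) simp
    moreover have "(4/\<Delta>)/2 = 2/\<Delta>" using D by (simp add: field_simps)
    ultimately show ?thesis by simp
  qed
  note v = v0 v1 v3
  define y where "y = 1/(2*rj) + v/2"
  have y: "y > 0" unfolding y_def using rj v0 by (intro add_pos_pos) auto
  have f1: "(b-a)/(2*rj)+1 \<le> (b-a) * y"
  proof -
    have "(b-a)/(2*rj)+1 = (b-a) * (1/(2*rj) + 1/(b-a))" using ab by (simp add: field_simps)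
    also have "\<dots> \<le> (b-a) * y" unfolding y_def using ab v by (intro mult_left_mono) auto
    finally show ?thesis .
  qed
  have f2: "\<Delta>/(2*rj)+2 \<le> \<Delta> * y"
  proof -
    have "\<Delta>/(2*rj)+2 = \<Delta> * (1/(2*rj) + 2/\<Delta>)" using D by (simp add: field_simps)
    also have "\<dots> \<le> \<Delta> * y" unfolding y_def using D v by (intro mult_left_mono) auto
    finally show ?thesis .
  qed
  have Nle: "N \<le> ((b-a)*\<Delta>) * y powr 2"
  proof -
    have "N \<le> ((b-a) * y) * (\<Delta> * y)"
      using N unfolding rj_def[symmetric]
      by (rule order_trans) (rule mult_mono[OF f1 f2]; use ab D y rj in auto)
    also have "\<dots> = ((b-a)*\<Delta>) * y powr 2" using y by (simp add: powr_realpow power2_eq_square)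
    finally show ?thesis .
  qed
  have "N powr (\<epsilon>/2) \<le> (((b-a)*\<Delta>) * y powr 2) powr (\<epsilon>/2)"
    by (rule powr_mono2) (use Nle N1 e in auto)
  also have "\<dots> = ((b-a)*\<Delta>) powr (\<epsilon>/2) * y powr \<epsilon>"
    by (simp add: powr_mult powr_powr)
  also have "y powr \<epsilon> \<le> (1/(2*rj)) powr \<epsilon> + (v/2) powr \<epsilon>"
    unfolding y_def by (rule powr_subadd) (use rj v e in auto)
  also have "(1/(2*rj)) powr \<epsilon> = (2*r0) powr (-\<epsilon>) * \<theta> powr (-(j*\<epsilon>/\<beta>))"
  proof -
    have "(1/(2*rj)) powr \<epsilon> = (2*rj) powr (-\<epsilon>)" using rj by (simp add: powr_minus_divide powr_divide)
    also have "\<dots> = (2*r0) powr (-\<epsilon>) * (\<theta> powr (j/\<beta>)) powr (-\<epsilon>)"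
      unfolding rj_def by (simp add: powr_mult mult.assoc)
    also have "(\<theta> powr (j/\<beta>)) powr (-\<epsilon>) = \<theta> powr (-(j*\<epsilon>/\<beta>))"
      by (simp add: powr_powr)
    finally show ?thesis .
  qed
  finally show ?thesis unfolding v_def by (simp add: mult_left_mono)
qed

lemma weighted_geom_bound:
  fixes \<theta> x :: real
  assumes th: "0 < \<theta>" "\<theta> < 1" and x: "0 < x" "x < 1"
  shows "(\<Sum>j<K. (1-\<theta>)*\<theta>^j * \<theta> powr (-(j*x))) \<le> 1/(1-x)"
proof -
  define q where "q = \<theta> powr (1-x)"
  have qj: "\<theta>^j * \<theta> powr (-(j*x)) = q^j" for j :: nat
  proof -
    have "\<theta>^j * \<theta> powr (-(j*x)) = \<theta> powr (real j) * \<theta> powr (-(j*x))" using th by (simp add: powr_realpow)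
    also have "\<dots> = \<theta> powr ((1-x) * real j)" by (simp add: powr_add[symmetric] algebra_simps)
    also have "\<dots> = q powr (real j)" unfolding q_def by (simp add: powr_powr)
    also have "\<dots> = q^j" unfolding q_def using th by (simp add: powr_realpow)
    finally show ?thesis .
  qed
  have qb: "q \<le> 1 - (1-x)*(1-\<theta>)" unfolding q_def by (rule bernoulli_powr) (use th x in auto)
  have q0: "0 \<le> q" unfolding q_def by simp
  have pos: "0 < (1-x)*(1-\<theta>)" using th x by simp
  have q1: "q < 1" using qb pos by linarith
  have "(\<Sum>j<K. (1-\<theta>)*\<theta>^j * \<theta> powr (-(j*x))) = (1-\<theta>) * (\<Sum>j<K. q^j)"
    by (simp add: sum_distrib_left mult.assoc qj)
  also have "\<dots> \<le> (1-\<theta>) * (1/(1-q))"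
    by (rule mult_left_mono[OF geom_sum_le[OF q0 q1]]) (use th in auto)
  also have "\<dots> \<le> (1-\<theta>) * (1/((1-x)*(1-\<theta>)))"
    by (rule mult_left_mono) (use qb pos th in \<open>auto intro!: divide_left_mono mult_pos_pos\<close>)
  also have "\<dots> = 1/(1-x)"
  proof -
    have "1 - \<theta> \<noteq> 0" "1 - x \<noteq> 0" using th x by auto
    moreover have gen: "\<And>y z::real. y \<noteq> 0 \<Longrightarrow> z \<noteq> 0 \<Longrightarrow> y * (1/(z*y)) = 1/z" by simp
    ultimately show ?thesis by blast
  qed
  finally show ?thesis .
qed

lemma count_product:
  fixes a b \<Delta> r0 \<theta> \<beta> \<epsilon> Fc :: real and N :: "nat \<Rightarrow> real" and K :: nat
  assumes ab: "a < b" and D: "\<Delta> > 0" and r0: "r0 > 0" and th: "0 < \<theta>" "\<theta> < 1" and be: "\<beta> > 0" "\<beta> \<le> 1"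
    and e: "0 < \<epsilon>" "\<epsilon> < \<beta>"
    and N: "\<And>j. j < K \<Longrightarrow> 1 \<le> N j \<and> N j \<le> ((b-a)/(2*(r0 * \<theta> powr (j/\<beta>)))+1)*(\<Delta>/(2*(r0 * \<theta> powr (j/\<beta>)))+2)"
    and F: "1 \<le> Fc"
  shows "(\<Prod>j<K. N j powr ((1-\<theta>)*\<theta>^j)) * Fc powr (\<theta>^K)
     \<le> (((b-a)*\<Delta>) powr (\<epsilon>/2) * ((2*r0) powr (-\<epsilon>) / (1-\<epsilon>/\<beta>) + (max (2/(b-a)) (4/\<Delta>) / 2) powr \<epsilon>)
         + \<theta>^K * Fc powr (\<epsilon>/2)) powr (2/\<epsilon>)"
proof -
  define A where "A = ((b-a)*\<Delta>) powr (\<epsilon>/2)"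
  define V where "V = (max (2/(b-a)) (4/\<Delta>) / 2) powr \<epsilon>"
  define Q where "Q = A * ((2*r0) powr (-\<epsilon>) / (1-\<epsilon>/\<beta>) + V)"
  define Nf where "Nf j = (if j < K then N j else Fc)" for j
  define w where "w j = (if j < K then (1-\<theta>)*\<theta>^j else \<theta>^K)" for j
  have e1: "\<epsilon> \<le> 1" using e be by simp
  have Nf1: "1 \<le> Nf j" for j using N F unfolding Nf_def by auto
  have Nfp: "0 < Nf j" for j using Nf1[of j] by linarith
  have xpos: "0 < Nf j powr (\<epsilon>/2)" for j using Nfp[of j] by simp
  have w0: "0 \<le> w j" for j using th unfolding w_def by auto
  have ws: "(\<Sum>j<Suc K. w j) = 1"
    using geom_weight_sum[of \<theta> K] by (simp add: w_def)
  have prodeq: "(\<Prod>j<Suc K. Nf j powr w j) = (\<Prod>j<K. N j powr ((1-\<theta>)*\<theta>^j)) * Fc powr (\<theta>^K)"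
    by (simp add: Nf_def w_def)
  define P where "P = (\<Prod>j<Suc K. Nf j powr w j)"
  have P0: "0 \<le> P" unfolding P_def by (simp add: prod_nonneg)
  have "(\<Prod>j<Suc K. (Nf j powr (\<epsilon>/2)) powr w j) \<le> (\<Sum>j<Suc K. w j * Nf j powr (\<epsilon>/2))"
    by (rule am_gm_powr) (use w0 ws xpos in auto)
  moreover have "(\<Prod>j<Suc K. (Nf j powr (\<epsilon>/2)) powr w j) = P powr (\<epsilon>/2)"
    unfolding P_def prod_powr_distrib by (intro prod.cong refl) (simp add: powr_powr mult.commute)
  ultimately have Pb: "P powr (\<epsilon>/2) \<le> (\<Sum>j<Suc K. w j * Nf j powr (\<epsilon>/2))" by simp
  have sumb: "(\<Sum>j<K. w j * Nf j powr (\<epsilon>/2)) \<le> Q"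
  proof -
    have tb: "w j * Nf j powr (\<epsilon>/2) \<le> A * ((2*r0) powr (-\<epsilon>) * ((1-\<theta>)*\<theta>^j * \<theta> powr (-(j*(\<epsilon>/\<beta>)))) + V * ((1-\<theta>)*\<theta>^j))"
      if j: "j < K" for j
    proof -
      have "N j powr (\<epsilon>/2) \<le> A * ((2*r0) powr (-\<epsilon>) * \<theta> powr (-(j*\<epsilon>/\<beta>)) + V)"
        unfolding A_def V_def
        by (rule term_bound[OF ab D r0 th(1) be(1) e(1) e1]) (use N[OF j] in auto)
      then have "(1-\<theta>)*\<theta>^j * N j powr (\<epsilon>/2) \<le> (1-\<theta>)*\<theta>^j * (A * ((2*r0) powr (-\<epsilon>) * \<theta> powr (-(j*\<epsilon>/\<beta>)) + V))"
        by (rule mult_left_mono) (use th in auto)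
      then show ?thesis using j unfolding w_def Nf_def by (simp add: algebra_simps)
    qed
    have "(\<Sum>j<K. w j * Nf j powr (\<epsilon>/2)) \<le> (\<Sum>j<K. A * ((2*r0) powr (-\<epsilon>) * ((1-\<theta>)*\<theta>^j * \<theta> powr (-(j*(\<epsilon>/\<beta>)))) + V * ((1-\<theta>)*\<theta>^j)))"
      by (rule sum_mono) (use tb in auto)
    also have "\<dots> = A * ((2*r0) powr (-\<epsilon>) * (\<Sum>j<K. (1-\<theta>)*\<theta>^j * \<theta> powr (-(j*(\<epsilon>/\<beta>)))) + V * (\<Sum>j<K. (1-\<theta>)*\<theta>^j))"
      by (simp add: distrib_left sum.distrib sum_distrib_left)
    also have "\<dots> \<le> A * ((2*r0) powr (-\<epsilon>) * (1/(1-\<epsilon>/\<beta>)) + V * 1)"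
    proof -
      have s1: "(\<Sum>j<K. (1-\<theta>)*\<theta>^j * \<theta> powr (-(j*(\<epsilon>/\<beta>)))) \<le> 1/(1-\<epsilon>/\<beta>)"
        by (rule weighted_geom_bound) (use th e be in auto)
      have s2: "(\<Sum>j<K. (1-\<theta>)*\<theta>^j) \<le> 1"
      proof -
        have "0 \<le> \<theta>^K" using th by simp
        then show ?thesis using geom_weight_sum[of \<theta> K] by linarith
      qed
      have "A \<ge> 0" "V \<ge> 0" "(2*r0) powr (-\<epsilon>) \<ge> 0" unfolding A_def V_def by auto
      then show ?thesis using s1 s2
        by (intro mult_left_mono add_mono mult_left_mono) auto
    qed
    also have "\<dots> = Q" unfolding Q_def by simp
    finally show ?thesis .
  qed
  have "(\<Sum>j<Suc K. w j * Nf j powr (\<epsilon>/2)) = (\<Sum>j<K. w j * Nf j powr (\<epsilon>/2)) + \<theta>^K * Fc powr (\<epsilon>/2)"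
    by (simp add: w_def Nf_def)
  with Pb sumb have Pb2: "P powr (\<epsilon>/2) \<le> Q + \<theta>^K * Fc powr (\<epsilon>/2)" by simp
  have "P = (P powr (\<epsilon>/2)) powr (2/\<epsilon>)" using e P0 by (simp add: powr_powr)
  also have "\<dots> \<le> (Q + \<theta>^K * Fc powr (\<epsilon>/2)) powr (2/\<epsilon>)"
    by (rule powr_mono2) (use Pb2 e in auto)
  finally show ?thesis unfolding P_def prodeq Q_def A_def V_def .
qed

lemma Q_bound:
  fixes a b \<Delta> c m \<theta> \<beta> \<epsilon> r0 :: real
  assumes ab: "a < b" and D: "\<Delta> > 0" and c: "c > 0" and m: "m > 0" and th: "0 < \<theta>" "\<theta> < 1"
    and be: "\<beta> > 0" "\<beta> \<le> 1" and e: "0 < \<epsilon>" "\<epsilon> < \<beta>"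
    and r0: "r0 = (\<theta>*m/c) powr (1/\<beta>)"
  shows "2 * (((b-a)*\<Delta>) powr (\<epsilon>/2) * ((2*r0) powr (-\<epsilon>) / (1-\<epsilon>/\<beta>) + (max (2/(b-a)) (4/\<Delta>) / 2) powr \<epsilon>)) powr (2/\<epsilon>)
    \<le> 2 powr (2/\<epsilon> - 2) * (b - a) * \<Delta> *
         (c powr (2/\<beta>) / ((1 - \<epsilon>/\<beta>) powr (2/\<epsilon>) * (\<theta> * m) powr (2/\<beta>)) + (max (2/(b-a)) (4/\<Delta>))\<^sup>2)"
proof -
  define v where "v = max (2/(b-a)) (4/\<Delta>)"
  define A where "A = (b-a)*\<Delta>"
  define x where "x = \<epsilon>/\<beta>"
  define s where "s = 2/\<epsilon>"
  have A: "A > 0" unfolding A_def using ab D by simp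
  have v: "v > 0" unfolding v_def using ab by (simp add: less_max_iff_disj)
  have x: "0 < x" "x < 1" unfolding x_def using e be by auto
  have s: "s \<ge> 1" unfolding s_def using e be by simp
  have r0p: "r0 > 0" unfolding r0 using th m c by simp
  define P1 where "P1 = (2*r0) powr (-\<epsilon>) / (1-x)"
  define P2 where "P2 = (v/2) powr \<epsilon>"
  have P1: "P1 > 0" unfolding P1_def using r0p x by simp
  have P2: "P2 > 0" unfolding P2_def using v by simp
  have "(A powr (\<epsilon>/2) * (P1 + P2)) powr s = A * (P1 + P2) powr s"
    unfolding s_def using A e by (simp add: powr_mult powr_powr)
  also have "\<dots> \<le> A * (2 powr (s - 1) * (P1 powr s + P2 powr s))"
    by (rule mult_left_mono[OF powr_convex2[OF P1 P2 s]]) (use A in simp)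
  also have "P1 powr s = (c powr (2/\<beta>) / ((1 - x) powr s * (\<theta> * m) powr (2/\<beta>))) / 4"
  proof -
    have "P1 powr s = ((2*r0) powr (-\<epsilon>)) powr s / (1-x) powr s"
      unfolding P1_def by (simp add: powr_divide)
    also have "((2*r0) powr (-\<epsilon>)) powr s = (2*r0) powr (-2)"
      unfolding s_def using e by (simp add: powr_powr)
    also have "(2*r0) powr (-2) = (1/4) * r0 powr (-2)"
      by (simp add: powr_mult powr_minus powr_realpow divide_simps)
    also have "r0 powr (-2) = c powr (2/\<beta>) / (\<theta> * m) powr (2/\<beta>)"
    proof -
      have "r0 powr (-2) = (\<theta>*m/c) powr (-(2/\<beta>))" unfolding r0 by (simp add: powr_powr)
      also have "\<dots> = (c/(\<theta>*m)) powr (2/\<beta>)"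
        using th m c by (simp add: powr_minus powr_divide divide_simps)
      also have "\<dots> = c powr (2/\<beta>) / (\<theta> * m) powr (2/\<beta>)" by (simp add: powr_divide)
      finally show ?thesis .
    qed
    finally show ?thesis by (simp add: field_simps)
  qed
  also have "P2 powr s = v\<^sup>2 / 4"
  proof -
    have "P2 powr s = (v/2) powr 2" unfolding P2_def s_def using e by (simp add: powr_powr)
    also have "\<dots> = v\<^sup>2/4" using v by (simp add: powr_realpow power_divide)
    finally show ?thesis .
  qed
  finally have main: "(A powr (\<epsilon>/2) * (P1 + P2)) powr s
      \<le> A * (2 powr (s - 1) * (c powr (2/\<beta>) / ((1 - x) powr s * (\<theta> * m) powr (2/\<beta>)) / 4 + v\<^sup>2 / 4))" .
  have "2 * (A * (2 powr (s - 1) * (c powr (2/\<beta>) / ((1 - x) powr s * (\<theta> * m) powr (2/\<beta>)) / 4 + v\<^sup>2 / 4)))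
      = 2 powr (s - 2) * A * (c powr (2/\<beta>) / ((1 - x) powr s * (\<theta> * m) powr (2/\<beta>)) + v\<^sup>2)"
  proof -
    have "2 * 2 powr (s - 1) / 4 = 2 powr (s - 2)"
    proof -
      have "2 powr (s - 1) = 2 powr (s - 2) * 2" by (simp add: powr_diff)
      then show ?thesis by simp
    qed
    then show ?thesis by (simp add: field_simps)
  qed
  with main have "2 * (A powr (\<epsilon>/2) * (P1 + P2)) powr s \<le> 2 powr (s - 2) * A * (c powr (2/\<beta>) / ((1 - x) powr s * (\<theta> * m) powr (2/\<beta>)) + v\<^sup>2)"
    by linarith
  then show ?thesis unfolding A_def P1_def P2_def v_def x_def s_def by (simp add: mult.assoc)
qed

context
  fixes M :: "'a measure" and X :: "real \<times> real \<Rightarrow> 'a \<Rightarrow> real" and T :: "(real \<times> real) set"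
  assumes P: "prob_space M"
    and G: "centered_gaussian_process M T X"
begin

lemma gp_H: "finite F \<Longrightarrow> F \<subseteq> T \<Longrightarrow> centered_gaussian_rv M (\<lambda>\<omega>. \<Sum>t\<in>F. c t * X t \<omega>)"
  using G unfolding centered_gaussian_process_def by simp

lemma gp_single: "t \<in> T \<Longrightarrow> centered_gaussian_rv M (X t)"
proof -
  assume t: "t \<in> T"
  have "centered_gaussian_rv M (\<lambda>\<omega>. \<Sum>p\<in>{t}. (\<lambda>_. 1) p * X p \<omega>)"
    by (rule gp_H) (use t in auto)
  then show ?thesis by simp
qed

lemma gp_meas: "t \<in> T \<Longrightarrow> X t \<in> borel_measurable M"
  using gp_single unfolding centered_gaussian_rv_def by blast

lemma gp_diff: "t \<in> T \<Longrightarrow> s \<in> T \<Longrightarrow> t \<noteq> s \<Longrightarrow> centered_gaussian_rv M (\<lambda>\<omega>. X t \<omega> - X s \<omega>)"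
proof -
  assume ts: "t \<in> T" "s \<in> T" "t \<noteq> s"
  have "centered_gaussian_rv M (\<lambda>\<omega>. \<Sum>p\<in>{t,s}. (\<lambda>p. if p = t then 1 else -1) p * X p \<omega>)"
    by (rule gp_H) (use ts in auto)
  then show ?thesis using ts by simp
qed

lemma exp_le_from_sqrt:
  assumes "sqrt (prob_space.expectation M (\<lambda>\<omega>. (Y \<omega>)\<^sup>2)) \<le> \<sigma>" "0 \<le> \<mu>"
  shows "2 * exp (\<mu>\<^sup>2 * prob_space.expectation M (\<lambda>\<omega>. (Y \<omega>)\<^sup>2) / 2) \<le> 2 * exp (\<mu>\<^sup>2 * \<sigma>\<^sup>2 / 2)"
proof -
  interpret prob_space M by (rule P)
  have E0: "0 \<le> expectation (\<lambda>\<omega>. (Y \<omega>)\<^sup>2)" by (rule integral_nonneg_AE) auto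
  have "expectation (\<lambda>\<omega>. (Y \<omega>)\<^sup>2) = (sqrt (expectation (\<lambda>\<omega>. (Y \<omega>)\<^sup>2)))\<^sup>2" using E0 by simp
  also have "\<dots> \<le> \<sigma>\<^sup>2" by (rule power_mono[OF assms(1)]) simp
  finally have "\<mu>\<^sup>2 * expectation (\<lambda>\<omega>. (Y \<omega>)\<^sup>2) / 2 \<le> \<mu>\<^sup>2 * \<sigma>\<^sup>2 / 2"
    by (simp add: divide_right_mono mult_left_mono)
  then show ?thesis by simp
qed

lemma mgf_point:
  assumes t: "t \<in> T" and sd: "sqrt (prob_space.expectation M (\<lambda>\<omega>. (X t \<omega>)\<^sup>2)) \<le> \<sigma>" and mu: "0 \<le> \<mu>"
  shows "(\<integral>\<^sup>+\<omega>. ennreal (exp (\<mu> * \<bar>X t \<omega>\<bar>)) \<partial>M) \<le> ennreal (2 * exp (\<mu>\<^sup>2 * \<sigma>\<^sup>2 / 2))"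
proof -
  have "(\<integral>\<^sup>+\<omega>. ennreal (exp (\<mu> * \<bar>X t \<omega>\<bar>)) \<partial>M)
      \<le> ennreal (2 * exp (\<mu>\<^sup>2 * prob_space.expectation M (\<lambda>\<omega>. (X t \<omega>)\<^sup>2) / 2))"
    by (rule gauss_abs_mgf[OF P gp_single[OF t] mu])
  also have "\<dots> \<le> ennreal (2 * exp (\<mu>\<^sup>2 * \<sigma>\<^sup>2 / 2))"
    by (rule ennreal_leI[OF exp_le_from_sqrt[OF sd mu]])
  finally show ?thesis .
qed

lemma mgf_diff:
  assumes t: "t \<in> T" and s: "s \<in> T"
    and sd: "sqrt (prob_space.expectation M (\<lambda>\<omega>. (X t \<omega> - X s \<omega>)\<^sup>2)) \<le> \<sigma>" and mu: "0 \<le> \<mu>"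
  shows "(\<integral>\<^sup>+\<omega>. ennreal (exp (\<mu> * \<bar>X t \<omega> - X s \<omega>\<bar>)) \<partial>M) \<le> ennreal (2 * exp (\<mu>\<^sup>2 * \<sigma>\<^sup>2 / 2))"
proof (cases "t = s")
  case True
  interpret prob_space M by (rule P)
  have "(\<integral>\<^sup>+\<omega>. ennreal (exp (\<mu> * \<bar>X t \<omega> - X s \<omega>\<bar>)) \<partial>M) = (\<integral>\<^sup>+\<omega>. 1 \<partial>M)" using True by simp
  also have "\<dots> = 1" by (simp add: emeasure_space_1)
  also have "\<dots> \<le> ennreal (2 * exp (\<mu>\<^sup>2 * \<sigma>\<^sup>2 / 2))"
  proof -
    have "1 \<le> exp (\<mu>\<^sup>2 * \<sigma>\<^sup>2 / 2)" by simp
    then have "1 \<le> 2 * exp (\<mu>\<^sup>2 * \<sigma>\<^sup>2 / 2)" by linarith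
    then show ?thesis using ennreal_leI by fastforce
  qed
  finally show ?thesis .
next
  case False
  have "(\<integral>\<^sup>+\<omega>. ennreal (exp (\<mu> * \<bar>X t \<omega> - X s \<omega>\<bar>)) \<partial>M)
      \<le> ennreal (2 * exp (\<mu>\<^sup>2 * prob_space.expectation M (\<lambda>\<omega>. (X t \<omega> - X s \<omega>)\<^sup>2) / 2))"
    by (rule gauss_abs_mgf[OF P gp_diff[OF t s False] mu])
  also have "\<dots> \<le> ennreal (2 * exp (\<mu>\<^sup>2 * \<sigma>\<^sup>2 / 2))"
    by (rule ennreal_leI[OF exp_le_from_sqrt[OF sd mu]])
  finally show ?thesis .
qed

end

primrec chainpt :: "(nat \<Rightarrow> 'p \<Rightarrow> 'p) \<Rightarrow> nat \<Rightarrow> 'p \<Rightarrow> nat \<Rightarrow> 'p" where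
  "chainpt \<pi> K s 0 = s"
| "chainpt \<pi> K s (Suc n) = \<pi> (K - Suc n) (chainpt \<pi> K s n)"

lemma chain_step:
  assumes "j < K"
  shows "chainpt \<pi> K s (K - j) = \<pi> j (chainpt \<pi> K s (K - Suc j))"
proof -
  have "K - j = Suc (K - Suc j)" using assms by simp
  moreover have "K - Suc (K - Suc j) = j" using assms by simp
  ultimately show ?thesis by simp
qed

lemma chain_in:
  assumes "s \<in> T" "\<And>j t. t \<in> T \<Longrightarrow> \<pi> j t \<in> T"
  shows "chainpt \<pi> K s n \<in> T"
  by (induction n) (use assms in auto)

lemma chain_telescope:
  fixes Xf :: "'p \<Rightarrow> real" and \<pi> :: "nat \<Rightarrow> 'p \<Rightarrow> 'p" and K :: nat and s :: 'p
  defines "tt \<equiv> (\<lambda>j. chainpt \<pi> K s (K - j))"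
  shows "Xf s = (\<Sum>j<Suc K. (if j = 0 then Xf (tt j) else Xf (tt j) - Xf (\<pi> (j - 1) (tt j))))"
proof -
  have "(\<Sum>j<Suc K. (if j = 0 then Xf (tt j) else Xf (tt j) - Xf (\<pi> (j - 1) (tt j))))
      = Xf (tt 0) + (\<Sum>j<K. Xf (tt (Suc j)) - Xf (\<pi> j (tt (Suc j))))"
    by (subst sum.lessThan_Suc_shift) simp
  also have "(\<Sum>j<K. Xf (tt (Suc j)) - Xf (\<pi> j (tt (Suc j)))) = (\<Sum>j<K. Xf (tt (Suc j)) - Xf (tt j))"
  proof (intro sum.cong refl)
    fix j assume "j \<in> {..<K}"
    then have "tt j = \<pi> j (tt (Suc j))" unfolding tt_def using chain_step[of j K \<pi> s] by simp
    then show "Xf (tt (Suc j)) - Xf (\<pi> j (tt (Suc j))) = Xf (tt (Suc j)) - Xf (tt j)" by simp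
  qed
  also have "\<dots> = Xf (tt K) - Xf (tt 0)" by (rule sum_lessThan_telescope)
  also have "tt K = s" unfolding tt_def by simp
  finally show ?thesis by simp
qed

lemma pointwise_bound:
  fixes Dv :: "nat \<Rightarrow> 'p \<Rightarrow> real" and U :: "nat \<Rightarrow> 'p set" and tt :: "nat \<Rightarrow> 'p"
    and w B :: "nat \<Rightarrow> real" and x lam :: real and K :: nat
  assumes U: "\<And>j. j < Suc K \<Longrightarrow> finite (U j)" and tt: "\<And>j. j < Suc K \<Longrightarrow> tt j \<in> U j"
    and w: "\<And>j. j < Suc K \<Longrightarrow> w j > 0" and ws: "(\<Sum>j<Suc K. w j) = 1"
    and B: "\<And>j. j < Suc K \<Longrightarrow> B j > 0"
    and x: "\<bar>x\<bar> \<le> (\<Sum>j<Suc K. \<bar>Dv j (tt j)\<bar>)" and lam: "0 \<le> lam"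
  shows "exp (lam * \<bar>x\<bar>) \<le> (\<Prod>j<Suc K. B j powr w j) *
            (\<Sum>j<Suc K. (w j / B j) * (\<Sum>u\<in>U j. exp ((lam / w j) * \<bar>Dv j u\<bar>)))"
proof -
  have "lam * \<bar>x\<bar> \<le> lam * (\<Sum>j<Suc K. \<bar>Dv j (tt j)\<bar>)" by (rule mult_left_mono[OF x lam])
  also have "\<dots> = (\<Sum>j<Suc K. lam * \<bar>Dv j (tt j)\<bar>)" by (rule sum_distrib_left)
  finally have "exp (lam * \<bar>x\<bar>) \<le> exp (\<Sum>j<Suc K. lam * \<bar>Dv j (tt j)\<bar>)" by simp
  also have "\<dots> \<le> (\<Prod>j<Suc K. B j powr w j) * (\<Sum>j<Suc K. (w j / B j) * exp (lam * \<bar>Dv j (tt j)\<bar> / w j))"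
    by (rule am_gm_exp) (use w ws B in auto)
  also have "\<dots> \<le> (\<Prod>j<Suc K. B j powr w j) * (\<Sum>j<Suc K. (w j / B j) * (\<Sum>u\<in>U j. exp ((lam / w j) * \<bar>Dv j u\<bar>)))"
  proof (rule mult_left_mono)
    show "0 \<le> (\<Prod>j<Suc K. B j powr w j)" by (simp add: prod_nonneg)
    show "(\<Sum>j<Suc K. (w j / B j) * exp (lam * \<bar>Dv j (tt j)\<bar> / w j))
        \<le> (\<Sum>j<Suc K. (w j / B j) * (\<Sum>u\<in>U j. exp ((lam / w j) * \<bar>Dv j u\<bar>)))"
    proof (rule sum_mono)
      fix j assume j: "j \<in> {..<Suc K}"
      have "exp (lam * \<bar>Dv j (tt j)\<bar> / w j) = exp ((lam / w j) * \<bar>Dv j (tt j)\<bar>)" by simp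
      also have "\<dots> \<le> (\<Sum>u\<in>U j. exp ((lam / w j) * \<bar>Dv j u\<bar>))"
        by (rule member_le_sum[where f="\<lambda>u. exp ((lam / w j) * \<bar>Dv j u\<bar>)"]) (use j tt U in auto)
      finally show "(w j / B j) * exp (lam * \<bar>Dv j (tt j)\<bar> / w j) \<le> (w j / B j) * (\<Sum>u\<in>U j. exp ((lam / w j) * \<bar>Dv j u\<bar>))"
        by (rule mult_left_mono) (use j w B in \<open>auto intro: less_imp_le\<close>)
    qed
  qed
  finally show ?thesis .
qed

lemma prod_B_powr:
  fixes J :: "'i set" and w N E :: "'i \<Rightarrow> real"
  assumes J: "finite J" and ws: "(\<Sum>j\<in>J. w j) = 1" and N: "\<And>j. j \<in> J \<Longrightarrow> N j > 0"
  shows "(\<Prod>j\<in>J. (2 * N j * exp (E j)) powr w j) = 2 * exp (\<Sum>j\<in>J. w j * E j) * (\<Prod>j\<in>J. N j powr w j)"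
proof -
  have "(\<Prod>j\<in>J. (2 * N j * exp (E j)) powr w j) = (\<Prod>j\<in>J. 2 powr w j * (exp (w j * E j) * N j powr w j))"
  proof (intro prod.cong refl)
    fix j assume j: "j \<in> J"
    have "(2 * N j * exp (E j)) powr w j = 2 powr w j * N j powr w j * exp (E j) powr w j"
      using N[OF j] by (simp add: powr_mult)
    also have "exp (E j) powr w j = exp (w j * E j)" by (simp add: powr_def)
    finally show "(2 * N j * exp (E j)) powr w j = 2 powr w j * (exp (w j * E j) * N j powr w j)" by simp
  qed
  also have "\<dots> = (\<Prod>j\<in>J. 2 powr w j) * ((\<Prod>j\<in>J. exp (w j * E j)) * (\<Prod>j\<in>J. N j powr w j))"
    by (simp add: prod.distrib)
  also have "(\<Prod>j\<in>J. 2 powr w j) = 2"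
    using powr_sum[of "2::real" w J] ws by simp
  also have "(\<Prod>j\<in>J. exp (w j * E j)) = exp (\<Sum>j\<in>J. w j * E j)" by (simp add: exp_sum[OF J])
  finally show ?thesis by (simp add: mult.assoc)
qed

definition wts :: "real \<Rightarrow> nat \<Rightarrow> nat \<Rightarrow> real" where
  "wts \<theta> K j = (if j < K then (1-\<theta>)*\<theta>^j else \<theta>^K)"

lemma wts_pos: "0 < \<theta> \<Longrightarrow> \<theta> < 1 \<Longrightarrow> wts \<theta> K j > 0"
  unfolding wts_def by auto

lemma wts_sum: "(\<Sum>j<Suc K. wts \<theta> K j) = 1"
  using geom_weight_sum[of \<theta> K] by (simp add: wts_def)

lemma sigma_sum:
  fixes \<theta> m lam :: real
  assumes th: "0 < \<theta>" "\<theta> < 1"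
  shows "(\<Sum>j<Suc K. wts \<theta> K j * ((lam / wts \<theta> K j)\<^sup>2 * (m * \<theta>^j)\<^sup>2 / 2)) \<le> lam\<^sup>2 * m\<^sup>2 / (2 * (1 - \<theta>)\<^sup>2)"
proof -
  have w: "wts \<theta> K j > 0" for j using wts_pos[OF th] .
  have eq: "wts \<theta> K j * ((lam / wts \<theta> K j)\<^sup>2 * (m * \<theta>^j)\<^sup>2 / 2) = lam\<^sup>2 / 2 * ((m * \<theta>^j)\<^sup>2 / wts \<theta> K j)" for j
    using w[of j] by (simp add: field_simps power2_eq_square)
  have s1: "(\<Sum>j<K. (m * \<theta>^j)\<^sup>2 / wts \<theta> K j) = m\<^sup>2 / (1-\<theta>) * (\<Sum>j<K. \<theta>^j)"
    unfolding sum_distrib_left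
  proof (intro sum.cong refl)
    fix j assume "j \<in> {..<K}"
    then have W: "wts \<theta> K j = (1-\<theta>)*\<theta>^j" unfolding wts_def by simp
    have gen: "\<And>t q. t > 0 \<Longrightarrow> q > 0 \<Longrightarrow> (m * t)\<^sup>2 / (q * t) = m\<^sup>2 / q * (t::real)"
      by (simp add: field_simps power2_eq_square)
    show "(m * \<theta>^j)\<^sup>2 / wts \<theta> K j = m\<^sup>2 / (1-\<theta>) * \<theta>^j"
      unfolding W by (rule gen) (use th in auto)
  qed
  have s2: "(\<Sum>j<K. \<theta>^j) = (1 - \<theta>^K) / (1 - \<theta>)" using th by (simp add: sum_gp_strict)
  have s3: "(m * \<theta>^K)\<^sup>2 / wts \<theta> K K = m\<^sup>2 * \<theta>^K"
    using th by (simp add: wts_def field_simps power2_eq_square)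
  have tot: "(\<Sum>j<Suc K. (m * \<theta>^j)\<^sup>2 / wts \<theta> K j) = m\<^sup>2 * (1 - \<theta>^K) / (1-\<theta>)\<^sup>2 + m\<^sup>2 * \<theta>^K"
    using s1 s2 s3 by (simp add: power2_eq_square)
  have le: "m\<^sup>2 * (1 - \<theta>^K) / (1-\<theta>)\<^sup>2 + m\<^sup>2 * \<theta>^K \<le> m\<^sup>2 / (1-\<theta>)\<^sup>2"
  proof -
    have q: "(1-\<theta>)\<^sup>2 > 0" "(1-\<theta>)\<^sup>2 \<le> 1" using th by (auto simp: power2_eq_square mult_le_one)
    have "m\<^sup>2 * \<theta>^K * (1-\<theta>)\<^sup>2 \<le> m\<^sup>2 * \<theta>^K" using q th by (intro mult_left_le) auto
    then have "m\<^sup>2 * \<theta>^K \<le> m\<^sup>2 * \<theta>^K / (1-\<theta>)\<^sup>2" using q by (simp add: field_simps)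
    then have "m\<^sup>2 * (1 - \<theta>^K) / (1-\<theta>)\<^sup>2 + m\<^sup>2 * \<theta>^K \<le> m\<^sup>2 * (1 - \<theta>^K) / (1-\<theta>)\<^sup>2 + m\<^sup>2 * \<theta>^K / (1-\<theta>)\<^sup>2"
      by simp
    also have "\<dots> = m\<^sup>2 / (1-\<theta>)\<^sup>2" by (simp add: add_divide_distrib[symmetric] algebra_simps)
    finally show ?thesis .
  qed
  have "(\<Sum>j<Suc K. wts \<theta> K j * ((lam / wts \<theta> K j)\<^sup>2 * (m * \<theta>^j)\<^sup>2 / 2))
      = lam\<^sup>2 / 2 * (\<Sum>j<Suc K. (m * \<theta>^j)\<^sup>2 / wts \<theta> K j)"
    unfolding sum_distrib_left by (rule sum.cong[OF refl eq])
  also have "\<dots> \<le> lam\<^sup>2 / 2 * (m\<^sup>2 / (1-\<theta>)\<^sup>2)" unfolding tot by (rule mult_left_mono[OF le]) simp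
  also have "\<dots> = lam\<^sup>2 * m\<^sup>2 / (2 * (1 - \<theta>)\<^sup>2)" by simp
  finally show ?thesis .
qed

context
  fixes M :: "'a measure" and X :: "real \<times> real \<Rightarrow> 'a \<Rightarrow> real"
    and a b \<Delta> m c \<beta> lam \<epsilon> \<theta> :: real
  assumes P: "prob_space M"
    and a0: "0 \<le> a" and ab: "a < b" and D: "\<Delta> > 0"
    and G: "centered_gaussian_process M (Tset a b \<Delta>) X"
    and mb: "\<And>t. t \<in> Tset a b \<Delta> \<Longrightarrow> sqrt (prob_space.expectation M (\<lambda>\<omega>. (X t \<omega>)\<^sup>2)) \<le> m"
    and m: "m > 0" and c: "c > 0" and be: "0 < \<beta>" "\<beta> \<le> 1"
    and incr: "\<And>h t s. h > 0 \<Longrightarrow> t \<in> Tset a b \<Delta> \<Longrightarrow> s \<in> Tset a b \<Delta> \<Longrightarrow> dmax t s \<le> h \<Longrightarrow>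
           sqrt (prob_space.expectation M (\<lambda>\<omega>. (X t \<omega> - X s \<omega>)\<^sup>2)) \<le> c * h powr \<beta>"
    and lam: "lam > 0" and e: "0 < \<epsilon>" "\<epsilon> < \<beta>" and th: "0 < \<theta>" "\<theta> < 1"
begin

lemma finite_bound:
  assumes F: "finite F" "F \<subseteq> Tset a b \<Delta>" "F \<noteq> {}" and K: "K > 0"
  shows "(\<integral>\<^sup>+\<omega>. (SUP s\<in>F. ennreal (exp (lam * \<bar>X s \<omega>\<bar>))) \<partial>M)
    \<le> ennreal (2 * exp (lam\<^sup>2 * m\<^sup>2 / (2 * (1 - \<theta>)\<^sup>2)) *
        (((b-a)*\<Delta>) powr (\<epsilon>/2) * ((2*((\<theta>*m/c) powr (1/\<beta>))) powr (-\<epsilon>) / (1-\<epsilon>/\<beta>) + (max (2/(b-a)) (4/\<Delta>) / 2) powr \<epsilon>)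
         + \<theta>^K * real (card F) powr (\<epsilon>/2)) powr (2/\<epsilon>))"
proof -
  define T where "T = Tset a b \<Delta>"
  define r0 where "r0 = (\<theta>*m/c) powr (1/\<beta>)"
  define rr where "rr j = r0 * \<theta> powr (real j/\<beta>)" for j :: nat
  have r0: "r0 > 0" unfolding r0_def using th m c by simp
  have rr: "rr j > 0" for j unfolding rr_def using r0 th by simp
  have "\<forall>j. \<exists>G. finite G \<and> G \<subseteq> T \<and> G \<noteq> {} \<and>
     real (card G) \<le> ((b-a)/(2*rr j)+1)*(\<Delta>/(2*rr j)+2) \<and> (\<forall>t\<in>T. \<exists>g\<in>G. dmax t g \<le> rr j)"
    unfolding T_def using covering[OF a0 ab D rr] by blast
  then have "\<exists>Gs. \<forall>j. finite (Gs j) \<and> Gs j \<subseteq> T \<and> Gs j \<noteq> {} \<and>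
     real (card (Gs j)) \<le> ((b-a)/(2*rr j)+1)*(\<Delta>/(2*rr j)+2) \<and> (\<forall>t\<in>T. \<exists>g\<in>Gs j. dmax t g \<le> rr j)"
    by (rule choice)
  then obtain Gs where Gs: "\<And>j. finite (Gs j)" "\<And>j. Gs j \<subseteq> T" "\<And>j. Gs j \<noteq> {}"
     "\<And>j. real (card (Gs j)) \<le> ((b-a)/(2*rr j)+1)*(\<Delta>/(2*rr j)+2)"
     "\<And>j t. t \<in> T \<Longrightarrow> \<exists>g\<in>Gs j. dmax t g \<le> rr j"
    by blast
  define \<pi> where "\<pi> j t = (SOME g. g \<in> Gs j \<and> dmax t g \<le> rr j)" for j t
  have \<pi>: "\<pi> j t \<in> Gs j \<and> dmax t (\<pi> j t) \<le> rr j" if "t \<in> T" for j t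
    unfolding \<pi>_def by (rule someI_ex) (use Gs(5)[OF that, of j] in blast)
  have \<pi>T: "\<pi> j t \<in> T" if "t \<in> T" for j t using \<pi>[OF that, of j] Gs(2)[of j] by blast
  have link: "sqrt (prob_space.expectation M (\<lambda>\<omega>. (X u \<omega> - X (\<pi> j u) \<omega>)\<^sup>2)) \<le> m * \<theta>^(Suc j)"
    if u: "u \<in> T" for u j
  proof -
    have "sqrt (prob_space.expectation M (\<lambda>\<omega>. (X u \<omega> - X (\<pi> j u) \<omega>)\<^sup>2)) \<le> c * rr j powr \<beta>"
      by (rule incr[OF rr]) (use u \<pi>[OF u, of j] \<pi>T[OF u, of j] in \<open>auto simp: T_def\<close>)
    also have "rr j powr \<beta> = \<theta> * m / c * \<theta>^j"
    proof -
      have "rr j powr \<beta> = r0 powr \<beta> * (\<theta> powr (real j/\<beta>)) powr \<beta>" unfolding rr_def by (simp add: powr_mult)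
      also have "r0 powr \<beta> = \<theta> * m / c" unfolding r0_def using be th m c by (simp add: powr_powr)
      also have "(\<theta> powr (real j/\<beta>)) powr \<beta> = \<theta>^j" using be th by (simp add: powr_powr powr_realpow)
      finally show ?thesis .
    qed
    also have "c * (\<theta> * m / c * \<theta>^j) = m * \<theta>^(Suc j)" using c by simp
    finally show ?thesis .
  qed
  define U where "U j = (if j < K then Gs j else F)" for j
  define Dx where "Dx j u \<omega> = (if j = 0 then X u \<omega> else X u \<omega> - X (\<pi> (j - 1) u) \<omega>)" for j u \<omega>
  define w where "w = wts \<theta> K"
  define \<sigma> where "\<sigma> j = m * \<theta>^j" for j :: nat
  define B where "B j = 2 * real (card (U j)) * exp ((lam / w j)\<^sup>2 * (\<sigma> j)\<^sup>2 / 2)" for j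
  have UT: "U j \<subseteq> T" for j unfolding U_def using Gs(2) F(2) T_def by auto
  have Ufin: "finite (U j)" for j unfolding U_def using Gs(1) F(1) by auto
  have Une: "U j \<noteq> {}" for j unfolding U_def using Gs(3) F(3) by auto
  have Ucard: "real (card (U j)) > 0" for j using Ufin[of j] Une[of j] by (simp add: card_gt_0_iff)
  have wpos: "w j > 0" for j unfolding w_def using wts_pos[OF th] .
  have ws: "(\<Sum>j<Suc K. w j) = 1" unfolding w_def by (rule wts_sum)
  have Bpos: "B j > 0" for j unfolding B_def using Ucard[of j] by simp
  define Pw where "Pw = (\<Prod>j<Suc K. B j powr w j)"
  define H where "H \<omega> = Pw * (\<Sum>j<Suc K. (w j / B j) * (\<Sum>u\<in>U j. exp ((lam / w j) * \<bar>Dx j u \<omega>\<bar>)))" for \<omega>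
  have pw: "exp (lam * \<bar>X s \<omega>\<bar>) \<le> H \<omega>" if s: "s \<in> F" for s \<omega>
  proof -
    define tt where "tt j = chainpt \<pi> K s (K - j)" for j
    have sT: "s \<in> T" using s F(2) T_def by auto
    have chT: "chainpt \<pi> K s n \<in> T" for n by (rule chain_in[OF sT]) (use \<pi>T in auto)
    have ttU: "tt j \<in> U j" if "j < Suc K" for j
    proof (cases "j < K")
      case True
      have "tt j = \<pi> j (chainpt \<pi> K s (K - Suc j))" unfolding tt_def by (rule chain_step[OF True])
      then show ?thesis using \<pi>[OF chT[of "K - Suc j"], of j] True unfolding U_def by simp
    next
      case False
      then have "j = K" using that by simp
      then show ?thesis unfolding tt_def U_def using s by simp
    qed
    have tel: "X s \<omega> = (\<Sum>j<Suc K. Dx j (tt j) \<omega>)"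
      unfolding Dx_def tt_def using chain_telescope[where Xf="\<lambda>p. X p \<omega>" and \<pi>=\<pi> and K=K and s=s] by simp
    have absb: "\<bar>X s \<omega>\<bar> \<le> (\<Sum>j<Suc K. \<bar>Dx j (tt j) \<omega>\<bar>)" unfolding tel by (rule sum_abs)
    show ?thesis unfolding H_def Pw_def
      by (rule pointwise_bound[where Dv="\<lambda>j u. Dx j u \<omega>" and tt=tt]) (use Ufin ttU wpos ws Bpos absb lam in auto)
  qed
  have Dmeas: "(\<lambda>\<omega>. Dx j u \<omega>) \<in> borel_measurable M" if "u \<in> T" for j u
  proof -
    have m1: "X u \<in> borel_measurable M" by (rule gp_meas[OF P G]) (use that T_def in auto)
    have m2: "X (\<pi> (j-1) u) \<in> borel_measurable M" by (rule gp_meas[OF P G]) (use \<pi>T[OF that] T_def in auto)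
    show ?thesis unfolding Dx_def using m1 m2 by (cases j) (auto simp: borel_measurable_diff)
  qed
  have term_int: "(\<integral>\<^sup>+\<omega>. ennreal (exp ((lam / w j) * \<bar>Dx j u \<omega>\<bar>)) \<partial>M) \<le> ennreal (2 * exp ((lam / w j)\<^sup>2 * (\<sigma> j)\<^sup>2 / 2))"
    if u: "u \<in> T" for j u
  proof (cases "j = 0")
    case True
    have "(\<integral>\<^sup>+\<omega>. ennreal (exp ((lam / w j) * \<bar>X u \<omega>\<bar>)) \<partial>M) \<le> ennreal (2 * exp ((lam / w j)\<^sup>2 * m\<^sup>2 / 2))"
      by (rule mgf_point[OF P G]) (use u mb wpos[of j] lam T_def in auto)
    then show ?thesis using True unfolding Dx_def \<sigma>_def by simp
  next
    case False
    then obtain i where i: "j = Suc i" by (cases j) auto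
    have "(\<integral>\<^sup>+\<omega>. ennreal (exp ((lam / w j) * \<bar>X u \<omega> - X (\<pi> i u) \<omega>\<bar>)) \<partial>M) \<le> ennreal (2 * exp ((lam / w j)\<^sup>2 * (m * \<theta>^(Suc i))\<^sup>2 / 2))"
      by (rule mgf_diff[OF P G]) (use u \<pi>T[OF u, of i] link[OF u, of i] wpos[of j] lam T_def in auto)
    then show ?thesis using i unfolding Dx_def \<sigma>_def by simp
  qed
  have sum_int: "(\<Sum>u\<in>U j. (\<integral>\<^sup>+\<omega>. ennreal (exp ((lam / w j) * \<bar>Dx j u \<omega>\<bar>)) \<partial>M)) \<le> ennreal (B j)" for j
  proof -
    have "(\<Sum>u\<in>U j. (\<integral>\<^sup>+\<omega>. ennreal (exp ((lam / w j) * \<bar>Dx j u \<omega>\<bar>)) \<partial>M))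
        \<le> (\<Sum>u\<in>U j. ennreal (2 * exp ((lam / w j)\<^sup>2 * (\<sigma> j)\<^sup>2 / 2)))"
      by (rule sum_mono) (use term_int UT in blast)
    also have "\<dots> = ennreal (B j)" unfolding B_def by (simp add: ennreal_mult'' ennreal_of_nat_eq_real_of_nat ac_simps)
    finally show ?thesis .
  qed
  have intH: "(\<integral>\<^sup>+\<omega>. ennreal (H \<omega>) \<partial>M) \<le> ennreal Pw"
  proof -
    have Pw0: "0 \<le> Pw" unfolding Pw_def by (simp add: prod_nonneg)
    have Hsplit: "ennreal (H \<omega>) = ennreal Pw * (\<Sum>j<Suc K. ennreal (w j / B j) * (\<Sum>u\<in>U j. ennreal (exp ((lam / w j) * \<bar>Dx j u \<omega>\<bar>))))" for \<omega>
    proof -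
      have "ennreal (H \<omega>) = ennreal Pw * ennreal (\<Sum>j<Suc K. (w j / B j) * (\<Sum>u\<in>U j. exp ((lam / w j) * \<bar>Dx j u \<omega>\<bar>)))"
        unfolding H_def by (rule ennreal_mult'[OF Pw0])
      also have "ennreal (\<Sum>j<Suc K. (w j / B j) * (\<Sum>u\<in>U j. exp ((lam / w j) * \<bar>Dx j u \<omega>\<bar>)))
          = (\<Sum>j<Suc K. ennreal ((w j / B j) * (\<Sum>u\<in>U j. exp ((lam / w j) * \<bar>Dx j u \<omega>\<bar>))))"
        by (rule sum_ennreal[symmetric]) (use wpos Bpos in \<open>auto intro!: mult_nonneg_nonneg sum_nonneg divide_nonneg_pos simp: less_imp_le\<close>)
      also have "\<dots> = (\<Sum>j<Suc K. ennreal (w j / B j) * (\<Sum>u\<in>U j. ennreal (exp ((lam / w j) * \<bar>Dx j u \<omega>\<bar>))))"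
      proof (intro sum.cong refl)
        fix j assume j: "j \<in> {..<Suc K}"
        have nn: "0 \<le> w j / B j" using wpos[of j] Bpos[of j] by simp
        have "ennreal ((w j / B j) * (\<Sum>u\<in>U j. exp ((lam / w j) * \<bar>Dx j u \<omega>\<bar>)))
            = ennreal (w j / B j) * ennreal (\<Sum>u\<in>U j. exp ((lam / w j) * \<bar>Dx j u \<omega>\<bar>))"
          by (rule ennreal_mult'[OF nn])
        also have "ennreal (\<Sum>u\<in>U j. exp ((lam / w j) * \<bar>Dx j u \<omega>\<bar>)) = (\<Sum>u\<in>U j. ennreal (exp ((lam / w j) * \<bar>Dx j u \<omega>\<bar>)))"
          by (rule sum_ennreal[symmetric]) simp
        finally show "ennreal ((w j / B j) * (\<Sum>u\<in>U j. exp ((lam / w j) * \<bar>Dx j u \<omega>\<bar>)))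
            = ennreal (w j / B j) * (\<Sum>u\<in>U j. ennreal (exp ((lam / w j) * \<bar>Dx j u \<omega>\<bar>)))" .
      qed
      finally show ?thesis .
    qed
    have "(\<integral>\<^sup>+\<omega>. ennreal (H \<omega>) \<partial>M)
        = ennreal Pw * (\<Sum>j<Suc K. ennreal (w j / B j) * (\<Sum>u\<in>U j. (\<integral>\<^sup>+\<omega>. ennreal (exp ((lam / w j) * \<bar>Dx j u \<omega>\<bar>)) \<partial>M)))"
    proof -
      have fm: "(\<lambda>\<omega>. ennreal (exp ((lam / w j) * \<bar>Dx j u \<omega>\<bar>))) \<in> borel_measurable M" if "u \<in> U j" for j u
      proof -
        have [measurable]: "Dx j u \<in> borel_measurable M" using Dmeas[of u j] UT[of j] that by auto
        show ?thesis by measurable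
      qed
      have "(\<integral>\<^sup>+\<omega>. ennreal (H \<omega>) \<partial>M)
          = (\<integral>\<^sup>+\<omega>. (\<Sum>j<Suc K. \<Sum>u\<in>U j. (ennreal Pw * ennreal (w j / B j)) * ennreal (exp ((lam / w j) * \<bar>Dx j u \<omega>\<bar>))) \<partial>M)"
        unfolding Hsplit by (simp only: sum_distrib_left mult.assoc)
      also have "\<dots> = (\<Sum>j<Suc K. \<Sum>u\<in>U j. (\<integral>\<^sup>+\<omega>. (ennreal Pw * ennreal (w j / B j)) * ennreal (exp ((lam / w j) * \<bar>Dx j u \<omega>\<bar>)) \<partial>M))"
      proof -
        have "(\<integral>\<^sup>+\<omega>. (\<Sum>j<Suc K. \<Sum>u\<in>U j. (ennreal Pw * ennreal (w j / B j)) * ennreal (exp ((lam / w j) * \<bar>Dx j u \<omega>\<bar>))) \<partial>M)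
           = (\<Sum>j<Suc K. (\<integral>\<^sup>+\<omega>. (\<Sum>u\<in>U j. (ennreal Pw * ennreal (w j / B j)) * ennreal (exp ((lam / w j) * \<bar>Dx j u \<omega>\<bar>))) \<partial>M))"
          by (rule nn_integral_sum) (use fm in \<open>auto intro!: borel_measurable_sum borel_measurable_times\<close>)
        also have "\<dots> = (\<Sum>j<Suc K. \<Sum>u\<in>U j. (\<integral>\<^sup>+\<omega>. (ennreal Pw * ennreal (w j / B j)) * ennreal (exp ((lam / w j) * \<bar>Dx j u \<omega>\<bar>)) \<partial>M))"
          by (intro sum.cong refl nn_integral_sum) (use fm in \<open>auto intro!: borel_measurable_times\<close>)
        finally show ?thesis .
      qed
      also have "\<dots> = (\<Sum>j<Suc K. \<Sum>u\<in>U j. (ennreal Pw * ennreal (w j / B j)) * (\<integral>\<^sup>+\<omega>. ennreal (exp ((lam / w j) * \<bar>Dx j u \<omega>\<bar>)) \<partial>M))"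
        by (intro sum.cong refl nn_integral_cmult) (use fm in auto)
      also have "\<dots> = ennreal Pw * (\<Sum>j<Suc K. ennreal (w j / B j) * (\<Sum>u\<in>U j. (\<integral>\<^sup>+\<omega>. ennreal (exp ((lam / w j) * \<bar>Dx j u \<omega>\<bar>)) \<partial>M)))"
        by (simp only: sum_distrib_left mult.assoc)
      finally show ?thesis .
    qed
    also have "\<dots> \<le> ennreal Pw * (\<Sum>j<Suc K. ennreal (w j / B j) * ennreal (B j))"
      by (intro mult_left_mono sum_mono sum_int) auto
    also have "(\<Sum>j<Suc K. ennreal (w j / B j) * ennreal (B j)) = ennreal 1"
    proof -
      have "(\<Sum>j<Suc K. ennreal (w j / B j) * ennreal (B j)) = (\<Sum>j<Suc K. ennreal (w j))"
      proof (intro sum.cong refl)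
        fix j
        have nn: "0 \<le> w j / B j" "0 \<le> B j" using wpos[of j] Bpos[of j] by auto
        have "ennreal (w j / B j) * ennreal (B j) = ennreal (w j / B j * B j)" by (rule ennreal_mult[OF nn, symmetric])
        also have "w j / B j * B j = w j" using Bpos[of j] by simp
        finally show "ennreal (w j / B j) * ennreal (B j) = ennreal (w j)" .
      qed
      also have "\<dots> = ennreal (\<Sum>j<Suc K. w j)" by (rule sum_ennreal) (use wpos in \<open>auto intro: less_imp_le\<close>)
      finally show ?thesis using ws by simp
    qed
    finally show ?thesis by simp
  qed
  have LHS: "(\<integral>\<^sup>+\<omega>. (SUP s\<in>F. ennreal (exp (lam * \<bar>X s \<omega>\<bar>))) \<partial>M) \<le> ennreal Pw"
  proof -
    have "(\<integral>\<^sup>+\<omega>. (SUP s\<in>F. ennreal (exp (lam * \<bar>X s \<omega>\<bar>))) \<partial>M) \<le> (\<integral>\<^sup>+\<omega>. ennreal (H \<omega>) \<partial>M)"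
      by (intro nn_integral_mono SUP_least ennreal_leI pw)
    then show ?thesis using intH by simp
  qed
  have Pw_eq: "Pw = 2 * exp (\<Sum>j<Suc K. w j * ((lam / w j)\<^sup>2 * (\<sigma> j)\<^sup>2 / 2)) * (\<Prod>j<Suc K. real (card (U j)) powr w j)"
    unfolding Pw_def B_def by (rule prod_B_powr) (use ws Ucard in auto)
  have expb: "exp (\<Sum>j<Suc K. w j * ((lam / w j)\<^sup>2 * (\<sigma> j)\<^sup>2 / 2)) \<le> exp (lam\<^sup>2 * m\<^sup>2 / (2 * (1 - \<theta>)\<^sup>2))"
    unfolding w_def \<sigma>_def using sigma_sum[OF th, of K lam m] by simp
  have prodU: "(\<Prod>j<Suc K. real (card (U j)) powr w j) = (\<Prod>j<K. real (card (Gs j)) powr ((1-\<theta>)*\<theta>^j)) * real (card F) powr (\<theta>^K)"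
    by (simp add: U_def w_def wts_def)
  have cp: "(\<Prod>j<K. real (card (Gs j)) powr ((1-\<theta>)*\<theta>^j)) * real (card F) powr (\<theta>^K)
     \<le> (((b-a)*\<Delta>) powr (\<epsilon>/2) * ((2*r0) powr (-\<epsilon>) / (1-\<epsilon>/\<beta>) + (max (2/(b-a)) (4/\<Delta>) / 2) powr \<epsilon>)
         + \<theta>^K * real (card F) powr (\<epsilon>/2)) powr (2/\<epsilon>)"
  proof (rule count_product[OF ab D r0 th be e])
    fix j assume "j < K"
    have "1 \<le> real (card (Gs j))" using Gs(1)[of j] Gs(3)[of j] by (simp add: Suc_leI card_gt_0_iff)
    then show "1 \<le> real (card (Gs j)) \<and> real (card (Gs j)) \<le> ((b-a)/(2*(r0 * \<theta> powr (j/\<beta>)))+1)*(\<Delta>/(2*(r0 * \<theta> powr (j/\<beta>)))+2)"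
      using Gs(4)[of j] unfolding rr_def by simp
  next
    show "1 \<le> real (card F)" using F by (simp add: Suc_leI card_gt_0_iff)
  qed
  have "Pw \<le> 2 * exp (lam\<^sup>2 * m\<^sup>2 / (2 * (1 - \<theta>)\<^sup>2)) *
        (((b-a)*\<Delta>) powr (\<epsilon>/2) * ((2*r0) powr (-\<epsilon>) / (1-\<epsilon>/\<beta>) + (max (2/(b-a)) (4/\<Delta>) / 2) powr \<epsilon>)
         + \<theta>^K * real (card F) powr (\<epsilon>/2)) powr (2/\<epsilon>)"
    unfolding Pw_eq prodU
    by (intro mult_mono cp expb) (auto simp: prod_nonneg)
  then show ?thesis using LHS unfolding r0_def by (meson ennreal_leI order_trans)
qed

end

theorem corollary6:
  fixes M :: "'a measure" and X :: "real \<times> real \<Rightarrow> 'a \<Rightarrow> real"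
    and a b \<Delta> m c \<beta> lam \<epsilon> \<theta> :: real
  assumes "prob_space M"
    and "0 \<le> a" "a < b" "\<Delta> > 0"
    and "centered_gaussian_process M (Tset a b \<Delta>) X"
    and "separable_process M (Tset a b \<Delta>) X"
    and "bdd_above ((\<lambda>t. sqrt (prob_space.expectation M (\<lambda>\<omega>. (X t \<omega>)\<^sup>2))) ` Tset a b \<Delta>)"
    and "m = (SUP t\<in>Tset a b \<Delta>. sqrt (prob_space.expectation M (\<lambda>\<omega>. (X t \<omega>)\<^sup>2)))"
    and "m > 0"
    and "c > 0" "0 < \<beta>" "\<beta> \<le> 1"
    and "\<And>h t s. h > 0 \<Longrightarrow> t \<in> Tset a b \<Delta> \<Longrightarrow> s \<in> Tset a b \<Delta> \<Longrightarrow> dmax t s \<le> h \<Longrightarrow>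
           sqrt (prob_space.expectation M (\<lambda>\<omega>. (X t \<omega> - X s \<omega>)\<^sup>2)) \<le> c * h powr \<beta>"
    and "lam > 0" "0 < \<epsilon>" "\<epsilon> < \<beta>" "0 < \<theta>" "\<theta> < 1"
  shows "(\<integral>\<^sup>+ \<omega>. (SUP t\<in>Tset a b \<Delta>. ennreal (exp (lam * \<bar>X t \<omega>\<bar>))) \<partial>M)
    \<le> ennreal (2 powr (2 / \<epsilon> - 2) * (b - a) * \<Delta> * exp (lam\<^sup>2 * m\<^sup>2 / (2 * (1 - \<theta>)\<^sup>2)) *
         (c powr (2 / \<beta>) / ((1 - \<epsilon> / \<beta>) powr (2 / \<epsilon>) * (\<theta> * m) powr (2 / \<beta>))
          + (max (2 / (b - a)) (4 / \<Delta>))\<^sup>2))"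
proof -
  note asm = assms
  interpret prob_space M by (rule assms(1))
  define T where "T = Tset a b \<Delta>"
  define Rv where "Rv = 2 powr (2 / \<epsilon> - 2) * (b - a) * \<Delta> * exp (lam\<^sup>2 * m\<^sup>2 / (2 * (1 - \<theta>)\<^sup>2)) *
         (c powr (2 / \<beta>) / ((1 - \<epsilon> / \<beta>) powr (2 / \<epsilon>) * (\<theta> * m) powr (2 / \<beta>))
          + (max (2 / (b - a)) (4 / \<Delta>))\<^sup>2)"
  define f where "f t \<omega> = ennreal (exp (lam * \<bar>X t \<omega>\<bar>))" for t \<omega>
  have mb: "sqrt (expectation (\<lambda>\<omega>. (X t \<omega>)\<^sup>2)) \<le> m" if "t \<in> Tset a b \<Delta>" for t
    unfolding assms(8) by (rule cSUP_upper[OF that assms(7)])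
  have fin: "(\<integral>\<^sup>+\<omega>. (SUP s\<in>F. f s \<omega>) \<partial>M) \<le> ennreal Rv" if F: "finite F" "F \<subseteq> T" "F \<noteq> {}" for F
  proof -
    define E0 where "E0 = exp (lam\<^sup>2 * m\<^sup>2 / (2 * (1 - \<theta>)\<^sup>2))"
    define Q where "Q = ((b-a)*\<Delta>) powr (\<epsilon>/2) * ((2*((\<theta>*m/c) powr (1/\<beta>))) powr (-\<epsilon>) / (1-\<epsilon>/\<beta>) + (max (2/(b-a)) (4/\<Delta>) / 2) powr \<epsilon>)"
    define g where "g K = 2 * E0 * (Q + \<theta>^K * real (card F) powr (\<epsilon>/2)) powr (2/\<epsilon>)" for K :: nat
    have bnd: "(\<integral>\<^sup>+\<omega>. (SUP s\<in>F. f s \<omega>) \<partial>M) \<le> ennreal (g K)" if K: "K > 0" for K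
      unfolding f_def g_def E0_def Q_def
      by (rule finite_bound[OF assms(1-5) mb assms(9-12) assms(13) assms(14-18) F[unfolded T_def] K])
    have Qpos: "Q > 0"
    proof -
      have "(max (2/(b-a)) (4/\<Delta>) / 2) > 0" using assms(3) by (simp add: less_max_iff_disj)
      then have q1: "(max (2/(b-a)) (4/\<Delta>) / 2) powr \<epsilon> > 0" by simp
      have "1 - \<epsilon>/\<beta> > 0" using asm(11,16) by simp
      then have q2: "(2*((\<theta>*m/c) powr (1/\<beta>))) powr (-\<epsilon>) / (1-\<epsilon>/\<beta>) \<ge> 0"
        by (intro divide_nonneg_pos) auto
      have q3: "((b-a)*\<Delta>) powr (\<epsilon>/2) > 0" using assms(3,4) by simp
      show ?thesis unfolding Q_def by (rule mult_pos_pos[OF q3 add_nonneg_pos[OF q2 q1]])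
    qed
    have lim: "g \<longlonglongrightarrow> 2 * E0 * Q powr (2/\<epsilon>)"
    proof -
      have "(\<lambda>K. \<theta>^K) \<longlonglongrightarrow> 0" using asm(17,18) by (intro LIMSEQ_power_zero) simp
      then have "(\<lambda>K. Q + \<theta>^K * real (card F) powr (\<epsilon>/2)) \<longlonglongrightarrow> Q + 0 * real (card F) powr (\<epsilon>/2)"
        by (intro tendsto_add tendsto_const tendsto_mult)
      then have "(\<lambda>K. Q + \<theta>^K * real (card F) powr (\<epsilon>/2)) \<longlonglongrightarrow> Q" by simp
      then have "(\<lambda>K. (Q + \<theta>^K * real (card F) powr (\<epsilon>/2)) powr (2/\<epsilon>)) \<longlonglongrightarrow> Q powr (2/\<epsilon>)"
        by (rule tendsto_powr) (use Qpos in auto)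
      then show ?thesis unfolding g_def by (rule tendsto_mult[OF tendsto_const])
    qed
    have "(\<integral>\<^sup>+\<omega>. (SUP s\<in>F. f s \<omega>) \<partial>M) \<le> ennreal (2 * E0 * Q powr (2/\<epsilon>))"
    proof (rule LIMSEQ_le[of "\<lambda>_. (\<integral>\<^sup>+\<omega>. (SUP s\<in>F. f s \<omega>) \<partial>M)" _ "\<lambda>K. ennreal (g K)"])
      show "(\<lambda>K. ennreal (g K)) \<longlonglongrightarrow> ennreal (2 * E0 * Q powr (2/\<epsilon>))" using lim by (rule tendsto_ennrealI)
      show "\<exists>N. \<forall>n\<ge>N. (\<integral>\<^sup>+\<omega>. (SUP s\<in>F. f s \<omega>) \<partial>M) \<le> ennreal (g n)"
        using bnd by (intro exI[of _ 1]) auto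
    qed simp
    also have "ennreal (2 * E0 * Q powr (2/\<epsilon>)) \<le> ennreal Rv"
    proof -
      have "2 * Q powr (2/\<epsilon>) \<le> 2 powr (2/\<epsilon> - 2) * (b - a) * \<Delta> *
         (c powr (2/\<beta>) / ((1 - \<epsilon>/\<beta>) powr (2/\<epsilon>) * (\<theta> * m) powr (2/\<beta>)) + (max (2/(b-a)) (4/\<Delta>))\<^sup>2)"
        unfolding Q_def by (rule Q_bound[OF assms(3,4,10,9,17,18,11,12,15,16) refl])
      then have "E0 * (2 * Q powr (2/\<epsilon>)) \<le> E0 * (2 powr (2/\<epsilon> - 2) * (b - a) * \<Delta> *
         (c powr (2/\<beta>) / ((1 - \<epsilon>/\<beta>) powr (2/\<epsilon>) * (\<theta> * m) powr (2/\<beta>)) + (max (2/(b-a)) (4/\<Delta>))\<^sup>2))"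
        by (rule mult_left_mono) (simp add: E0_def)
      then have "2 * E0 * Q powr (2/\<epsilon>) \<le> Rv" unfolding Rv_def E0_def by (simp add: ac_simps)
      then show ?thesis by (rule ennreal_leI)
    qed
    finally show ?thesis .
  qed
  obtain S N where S: "countable S" "S \<subseteq> T" "N \<in> null_sets M"
    and sep: "\<And>\<omega> t. \<omega> \<in> space M - N \<Longrightarrow> t \<in> T \<Longrightarrow> \<exists>s. (\<forall>n. s n \<in> S) \<and> s \<longlonglongrightarrow> t \<and> (\<lambda>n. X (s n) \<omega>) \<longlonglongrightarrow> X t \<omega>"
    using assms(6) unfolding separable_process_def T_def by blast
  have Tne: "(a, a) \<in> T" unfolding T_def Tset_def using assms(2,3,4) by auto
  have "space M - N \<noteq> {}"
  proof
    assume "space M - N = {}"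
    then have "space M \<subseteq> N" by blast
    then have "emeasure M (space M) \<le> emeasure M N" using S(3) by (intro emeasure_mono) auto
    then show False using S(3) emeasure_space_1 by (simp add: null_setsD1)
  qed
  then obtain \<omega>0 where \<omega>0: "\<omega>0 \<in> space M - N" by blast
  have Sne: "S \<noteq> {}" using sep[OF \<omega>0 Tne] by blast
  have fmeas: "(\<lambda>\<omega>. f t \<omega>) \<in> borel_measurable M" if "t \<in> T" for t
  proof -
    have [measurable]: "X t \<in> borel_measurable M" by (rule gp_meas[OF assms(1,5)]) (use that T_def in auto)
    show ?thesis unfolding f_def by measurable
  qed
  have AEle: "AE \<omega> in M. (SUP t\<in>T. f t \<omega>) \<le> (SUP s\<in>S. f s \<omega>)"
  proof (rule AE_I'[OF S(3)])
    show "{\<omega> \<in> space M. \<not> (SUP t\<in>T. f t \<omega>) \<le> (SUP s\<in>S. f s \<omega>)} \<subseteq> N"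
    proof (rule subsetI, rule ccontr)
      fix \<omega> assume \<omega>: "\<omega> \<in> {\<omega> \<in> space M. \<not> (SUP t\<in>T. f t \<omega>) \<le> (SUP s\<in>S. f s \<omega>)}" and nN: "\<omega> \<notin> N"
      have "(SUP t\<in>T. f t \<omega>) \<le> (SUP s\<in>S. f s \<omega>)"
      proof (rule SUP_least)
        fix t assume t: "t \<in> T"
        obtain sq where sq: "\<And>n. sq n \<in> S" "(\<lambda>n. X (sq n) \<omega>) \<longlonglongrightarrow> X t \<omega>"
          using sep[of \<omega> t] \<omega> nN t by auto
        have "(\<lambda>n. f (sq n) \<omega>) \<longlonglongrightarrow> f t \<omega>"
          unfolding f_def by (intro tendsto_ennrealI tendsto_intros sq(2))
        moreover have "\<forall>n\<ge>0. f (sq n) \<omega> \<le> (SUP s\<in>S. f s \<omega>)"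
          using sq(1) by (auto intro: SUP_upper)
        ultimately show "f t \<omega> \<le> (SUP s\<in>S. f s \<omega>)"
          by (intro LIMSEQ_le_const2[where X="\<lambda>n. f (sq n) \<omega>"]) auto
      qed
      then show False using \<omega> by simp
    qed
  qed
  define sq where "sq = from_nat_into S"
  define Gn where "Gn n \<omega> = (SUP s\<in>sq ` {..n}. f s \<omega>)" for n \<omega>
  have sqS: "sq n \<in> S" for n unfolding sq_def using from_nat_into[OF Sne] .
  have SUPeq: "(SUP s\<in>S. f s \<omega>) = (SUP n. Gn n \<omega>)" for \<omega>
  proof -
    have "S = (\<Union>n. sq ` {..n})"
    proof
      show "S \<subseteq> (\<Union>n. sq ` {..n})"
      proof
        fix s assume "s \<in> S"
        then have "s \<in> range sq" unfolding sq_def using range_from_nat_into[OF Sne S(1)] by simp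
        then obtain n where "s = sq n" by auto
        then show "s \<in> (\<Union>n. sq ` {..n})" by auto
      qed
      show "(\<Union>n. sq ` {..n}) \<subseteq> S" using sqS by auto
    qed
    then show ?thesis unfolding Gn_def by (simp add: SUP_UNION)
  qed
  have inc: "incseq Gn"
    unfolding incseq_def le_fun_def Gn_def by (auto intro!: SUP_subset_mono)
  have Gmeas: "Gn n \<in> borel_measurable M" for n
  proof -
    have "(\<lambda>\<omega>. SUP s\<in>sq ` {..n}. f s \<omega>) \<in> borel_measurable M"
    proof (rule borel_measurable_SUP)
      show "countable (sq ` {..n})" by simp
      fix s assume "s \<in> sq ` {..n}"
      then have "s \<in> T" using sqS S(2) by auto
      then show "f s \<in> borel_measurable M" using fmeas[of s] by simp
    qed
    then show ?thesis unfolding Gn_def by (simp add: fun_eq_iff)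
  qed
  have "(\<integral>\<^sup>+ \<omega>. (SUP t\<in>T. f t \<omega>) \<partial>M) \<le> (\<integral>\<^sup>+ \<omega>. (SUP s\<in>S. f s \<omega>) \<partial>M)"
    by (rule nn_integral_mono_AE[OF AEle])
  also have "\<dots> = (\<integral>\<^sup>+ \<omega>. (SUP n. Gn n \<omega>) \<partial>M)" by (simp add: SUPeq)
  also have "\<dots> = (SUP n. integral\<^sup>N M (Gn n))" by (rule nn_integral_monotone_convergence_SUP[OF inc Gmeas])
  also have "\<dots> \<le> ennreal Rv"
  proof (rule SUP_least)
    fix n
    show "integral\<^sup>N M (Gn n) \<le> ennreal Rv" unfolding Gn_def
      by (rule fin) (use sqS S(2) in auto)
  qed
  finally show ?thesis unfolding T_def f_def Rv_def .
qed

end
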